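(* Let $2<p<\infty$ and let $w=(w_n)$ be a sequence of positive reals with $w_n\to0$ and $\sum_{n}w_n^{2p/(p-2)}=\infty$. Then the unit vector basis $(e_n)$ of $X_{p,w}$ has the factorization property: whenever $T\colon X_{p,w}\to X_{p,w}$ is a bounded linear operator with $\inf_n|e_n^*(Te_n)|>0$, there exist bounded linear operators $A,B\colon X_{p,w}\to X_{p,w}$ with $ATB=I$, the identity on $X_{p,w}$.
   Context: $X_{p,w}$ is the space of real sequences $(x_n)$ with $(x_n)\in\ell_p$ and $(x_nw_n)\in\ell_2$, normed by $\|(x_n)\|=\max\{\|(x_n)\|_{\ell_p},\|(x_nw_n)\|_{\ell_2}\}$; the unit vectors $(e_n)$ form an unconditional shrinking basis, and $(e_n^* )$ are the coordinate functionals. *)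

theory Defs
  imports "HOL-Analysis.Analysis"
begin

definition Xpw :: "real \<Rightarrow> (nat \<Rightarrow> real) \<Rightarrow> (nat \<Rightarrow> real) set" where
  "Xpw p w = {x. summable (\<lambda>n. \<bar>x n\<bar> powr p) \<and> summable (\<lambda>n. (x n * w n)\<^sup>2)}"

definition lp_norm :: "real \<Rightarrow> (nat \<Rightarrow> real) \<Rightarrow> real" where
  "lp_norm p x = (\<Sum>n. \<bar>x n\<bar> powr p) powr (1 / p)"

definition wl2_norm :: "(nat \<Rightarrow> real) \<Rightarrow> (nat \<Rightarrow> real) \<Rightarrow> real" where
  "wl2_norm w x = sqrt (\<Sum>n. (x n * w n)\<^sup>2)"

definition Xpw_norm :: "real \<Rightarrow> (nat \<Rightarrow> real) \<Rightarrow> (nat \<Rightarrow> real) \<Rightarrow> real" where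
  "Xpw_norm p w x = max (lp_norm p x) (wl2_norm w x)"

text \<open>Unit vectors e_n; the coordinate functional e_n^* is evaluation at n.\<close>
definition unit_vec :: "nat \<Rightarrow> nat \<Rightarrow> real" where
  "unit_vec n = (\<lambda>k. if k = n then 1 else 0)"

text \<open>Bounded linear operators X_{p,w} -> X_{p,w} (only their values on X_{p,w} matter).\<close>
definition bounded_op_Xpw :: "real \<Rightarrow> (nat \<Rightarrow> real) \<Rightarrow> ((nat \<Rightarrow> real) \<Rightarrow> (nat \<Rightarrow> real)) \<Rightarrow> bool" where
  "bounded_op_Xpw p w T \<longleftrightarrow>
     (\<forall>x\<in>Xpw p w. T x \<in> Xpw p w) \<and>
     (\<forall>x\<in>Xpw p w. \<forall>y\<in>Xpw p w. T (\<lambda>k. x k + y k) = (\<lambda>k. T x k + T y k)) \<and>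
     (\<forall>x\<in>Xpw p w. \<forall>c::real. T (\<lambda>k. c * x k) = (\<lambda>k. c * T x k)) \<and>
     (\<exists>C. \<forall>x\<in>Xpw p w. Xpw_norm p w (T x) \<le> C * Xpw_norm p w x)"

end

theory Submission
  imports Defs
begin

lemma powr_convex2:
  fixes x y t q :: real
  assumes q: "q \<ge> 1" and x: "x \<ge> 0" and y: "y \<ge> 0" and t: "0 \<le> t" "t \<le> 1"
  shows "(t * x + (1 - t) * y) powr q \<le> t * x powr q + (1 - t) * y powr q"
proof -
  have pw: "s powr q \<le> s" if "0 \<le> s" "s \<le> 1" for s :: real
  proof (cases "s = 0")
    case True then show ?thesis by simp
  next
    case False then show ?thesis using powr_le_one_le[of s q] that q by simp
  qed
  show ?thesis
  proof (cases "x = 0 \<or> y = 0 \<or> t = 0 \<or> t = 1")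
    case True
    then show ?thesis
    proof (elim disjE)
      assume "x = 0"
      then have "(t * x + (1 - t) * y) powr q = (1-t) powr q * y powr q"
        using powr_mult t y by simp
      also have "\<dots> \<le> (1-t) * y powr q" using pw[of "1-t"] t by (intro mult_right_mono) auto
      finally show ?thesis using \<open>x = 0\<close> by simp
    next
      assume "y = 0"
      then have "(t * x + (1 - t) * y) powr q = t powr q * x powr q"
        using powr_mult t x by simp
      also have "\<dots> \<le> t * x powr q" using pw[of "t"] t by (intro mult_right_mono) auto
      finally show ?thesis using \<open>y = 0\<close> by simp
    qed auto
  next
    case False
    then have "x \<in> {0<..}" "y \<in> {0<..}" using x y by auto
    from convex_onD[OF powr_convex[OF q], of "1-t" x y] this t
    show ?thesis by (simp add: algebra_simps)
  qed
qed

lemma convex_on_powr0: assumes "q \<ge> 1" shows "convex_on {0..} (\<lambda>x::real. x powr q)"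
proof (rule convex_onI)
  fix t x y :: real assume "t > 0" "t < 1" "x \<in> {0..}" "y \<in> {0..}"
  then show "((1 - t) *\<^sub>R x + t *\<^sub>R y) powr q \<le> (1 - t) * x powr q + t * y powr q"
    using powr_convex2[OF assms, of x y "1-t"] by auto
qed (simp add: convex_real_interval)

lemma jensen_powr:
  fixes \<theta> z :: "'a \<Rightarrow> real"
  assumes "finite I" "I \<noteq> {}" "q \<ge> 1" "\<And>i. i \<in> I \<Longrightarrow> \<theta> i \<ge> 0" "(\<Sum>i\<in>I. \<theta> i) = 1"
  shows "\<bar>\<Sum>i\<in>I. \<theta> i * z i\<bar> powr q \<le> (\<Sum>i\<in>I. \<theta> i * \<bar>z i\<bar> powr q)"
proof -
  have "\<bar>\<Sum>i\<in>I. \<theta> i * z i\<bar> \<le> (\<Sum>i\<in>I. \<theta> i * \<bar>z i\<bar>)"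
    by (rule order.trans[OF sum_abs]) (simp add: abs_mult assms(4))
  then have "\<bar>\<Sum>i\<in>I. \<theta> i * z i\<bar> powr q \<le> (\<Sum>i\<in>I. \<theta> i * \<bar>z i\<bar>) powr q"
    using assms by (intro powr_mono2) auto
  also have "\<dots> \<le> (\<Sum>i\<in>I. \<theta> i * \<bar>z i\<bar> powr q)"
  proof -
    have "\<And>i. i \<in> I \<Longrightarrow> \<bar>z i\<bar> \<in> {0..}" by simp
    from convex_on_sum[OF assms(1,2) convex_on_powr0[OF assms(3)] assms(5) assms(4) this]
    show ?thesis by simp
  qed
  finally show ?thesis .
qed


lemma abs_powr2: "\<bar>y::real\<bar> powr 2 = y\<^sup>2"
  by simp

lemma minkowski:
  fixes a b :: "nat \<Rightarrow> real"
  assumes q: "q \<ge> 1" and sa: "summable (\<lambda>n. \<bar>a n\<bar> powr q)" and sb: "summable (\<lambda>n. \<bar>b n\<bar> powr q)"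
  shows "summable (\<lambda>n. \<bar>a n + b n\<bar> powr q) \<and>
    (\<Sum>n. \<bar>a n + b n\<bar> powr q) powr (1/q) \<le> (\<Sum>n. \<bar>a n\<bar> powr q) powr (1/q) + (\<Sum>n. \<bar>b n\<bar> powr q) powr (1/q)"
proof -
  define SA where "SA = (\<Sum>n. \<bar>a n\<bar> powr q)"
  define SB where "SB = (\<Sum>n. \<bar>b n\<bar> powr q)"
  define A where "A = SA powr (1/q)"
  define B where "B = SB powr (1/q)"
  have SA0: "SA \<ge> 0" unfolding SA_def by (rule suminf_nonneg[OF sa]) simp
  have SB0: "SB \<ge> 0" unfolding SB_def by (rule suminf_nonneg[OF sb]) simp
  have Aq: "A powr q = SA" using SA0 q by (simp add: A_def powr_powr)
  have Bq: "B powr q = SB" using SB0 q by (simp add: B_def powr_powr)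
  have A0: "A \<ge> 0" "B \<ge> 0" by (simp_all add: A_def B_def)
  show ?thesis
  proof (cases "A = 0 \<or> B = 0")
    case True
    then show ?thesis
    proof
      assume "A = 0"
      then have "SA = 0" using Aq q by simp
      then have "\<forall>n. \<bar>a n\<bar> powr q = 0" using suminf_eq_zero_iff[OF sa] SA_def by simp
      then have "\<And>n. a n = 0" by simp
      then show ?thesis using sb A0 by (simp add: SB_def[symmetric] B_def[symmetric] A_def[symmetric] SA_def[symmetric] \<open>A = 0\<close>)
    next
      assume "B = 0"
      then have "SB = 0" using Bq q by simp
      then have "\<forall>n. \<bar>b n\<bar> powr q = 0" using suminf_eq_zero_iff[OF sb] SB_def by simp
      then have "\<And>n. b n = 0" by simp
      then show ?thesis using sa A0 by (simp add: SB_def[symmetric] B_def[symmetric] A_def[symmetric] SA_def[symmetric] \<open>B = 0\<close>)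
    qed
  next
    case False
    then have Ap: "A > 0" "B > 0" using A0 by auto
    define t where "t = A / (A + B)"
    have t01: "0 \<le> t" "t \<le> 1" using Ap by (auto simp: t_def)
    define g where "g n = (A + B) powr q * (t * (\<bar>a n\<bar> powr q / SA) + (1 - t) * (\<bar>b n\<bar> powr q / SB))" for n
    have SAp: "SA > 0" "SB > 0" using Ap Aq Bq by auto
    have pt: "\<bar>a n + b n\<bar> powr q \<le> g n" for n
    proof -
      have e1: "t * (\<bar>a n\<bar> / A) + (1 - t) * (\<bar>b n\<bar> / B) = (\<bar>a n\<bar> + \<bar>b n\<bar>) / (A + B)"
      proof -
        have "1 - t = B / (A + B)" using Ap by (simp add: t_def field_simps)
        then have t2: "(1 - t) * (\<bar>b n\<bar> / B) = \<bar>b n\<bar> / (A + B)" using Ap by simp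
        have t1: "t * (\<bar>a n\<bar> / A) = \<bar>a n\<bar> / (A + B)" using Ap by (simp add: t_def)
        show ?thesis unfolding t1 t2 by (simp add: add_divide_distrib)
      qed
      have "\<bar>a n + b n\<bar> powr q \<le> (\<bar>a n\<bar> + \<bar>b n\<bar>) powr q"
        using q by (intro powr_mono2) auto
      also have "(\<bar>a n\<bar> + \<bar>b n\<bar>) = (A + B) * (t * (\<bar>a n\<bar> / A) + (1 - t) * (\<bar>b n\<bar> / B))"
        unfolding e1 using Ap by (simp add: field_simps)
      also have "((A + B) * (t * (\<bar>a n\<bar> / A) + (1 - t) * (\<bar>b n\<bar> / B))) powr q
          = (A + B) powr q * (t * (\<bar>a n\<bar> / A) + (1 - t) * (\<bar>b n\<bar> / B)) powr q"
        using Ap t01 by (intro powr_mult; auto)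
      also have "\<dots> \<le> (A + B) powr q * (t * (\<bar>a n\<bar> / A) powr q + (1 - t) * (\<bar>b n\<bar> / B) powr q)"
        using powr_convex2[OF q _ _ t01, of "\<bar>a n\<bar> / A" "\<bar>b n\<bar> / B"] Ap
        by (intro mult_left_mono) auto
      also have "\<dots> = g n"
        using Ap by (simp add: g_def powr_divide Aq Bq)
      finally show ?thesis .
    qed
    have sg: "summable g" unfolding g_def
      by (intro summable_mult summable_add summable_divide sa sb)
    have sab: "summable (\<lambda>n. \<bar>a n + b n\<bar> powr q)"
      by (rule summable_comparison_test[OF _ sg]) (use pt in auto)
    have "(\<Sum>n. \<bar>a n + b n\<bar> powr q) \<le> suminf g"
      by (rule suminf_le[OF pt sab sg])
    also have "suminf g = (A + B) powr q * (t * (SA / SA) + (1 - t) * (SB / SB))"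
    proof -
      have s1: "(\<lambda>n. \<bar>a n\<bar> powr q) sums SA" using sa SA_def summable_sums by blast
      have s2: "(\<lambda>n. \<bar>b n\<bar> powr q) sums SB" using sb SB_def summable_sums by blast
      have "g sums ((A + B) powr q * (t * (SA / SA) + (1 - t) * (SB / SB)))"
        unfolding g_def by (intro sums_mult sums_add sums_divide s1 s2)
      then show ?thesis by (rule sums_unique[symmetric])
    qed
    also have "\<dots> = (A + B) powr q" using SAp by simp
    finally have le: "(\<Sum>n. \<bar>a n + b n\<bar> powr q) \<le> (A + B) powr q" .
    have "(\<Sum>n. \<bar>a n + b n\<bar> powr q) powr (1/q) \<le> ((A + B) powr q) powr (1/q)"
      using q le by (intro powr_mono2) (auto intro: suminf_nonneg[OF sab])
    also have "\<dots> = A + B" using Ap q by (simp add: powr_powr)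
    finally show ?thesis using sab by (simp add: A_def B_def SA_def SB_def)
  qed
qed


locale xpw =
  fixes p :: real and w :: "nat \<Rightarrow> real"
  assumes p2: "2 < p" and wpos: "\<And>n. 0 < w n" and wlim: "w \<longlonglongrightarrow> 0"
begin

abbreviation "X \<equiv> Xpw p w"
abbreviation "N \<equiv> Xpw_norm p w"

definition Sp :: "(nat \<Rightarrow> real) \<Rightarrow> real" where "Sp x = (\<Sum>n. \<bar>x n\<bar> powr p)"
definition S2 :: "(nat \<Rightarrow> real) \<Rightarrow> real" where "S2 x = (\<Sum>n. (x n * w n)\<^sup>2)"

lemma p1: "p \<ge> 1" "p > 0" using p2 by auto

lemma N_eq: "N x = max (Sp x powr (1/p)) (sqrt (S2 x))"
  by (simp add: Xpw_norm_def lp_norm_def wl2_norm_def Sp_def S2_def)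

lemma X_iff: "x \<in> X \<longleftrightarrow> summable (\<lambda>n. \<bar>x n\<bar> powr p) \<and> summable (\<lambda>n. (x n * w n)\<^sup>2)"
  by (simp add: Xpw_def)

lemma XD: assumes "x \<in> X" shows "summable (\<lambda>n. \<bar>x n\<bar> powr p)" "summable (\<lambda>n. (x n * w n)\<^sup>2)"
  using assms by (auto simp: X_iff)

lemma Sp_nonneg: "x \<in> X \<Longrightarrow> 0 \<le> Sp x"
  unfolding Sp_def by (rule suminf_nonneg) (auto dest: XD)

lemma S2_nonneg: "x \<in> X \<Longrightarrow> 0 \<le> S2 x"
  unfolding S2_def by (rule suminf_nonneg) (auto dest: XD)

lemma N_nonneg: "0 \<le> N x"
  unfolding N_eq by (simp add: le_max_iff_disj)

lemma Sp_le_N: assumes "x \<in> X" shows "Sp x \<le> N x powr p"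
proof -
  have "Sp x = (Sp x powr (1/p)) powr p" using Sp_nonneg[OF assms] p1 by (simp add: powr_powr)
  also have "\<dots> \<le> N x powr p" unfolding N_eq using p1 by (intro powr_mono2) auto
  finally show ?thesis .
qed

lemma S2_le_N: assumes "x \<in> X" shows "S2 x \<le> (N x)\<^sup>2"
proof -
  have "S2 x = (sqrt (S2 x))\<^sup>2" using S2_nonneg[OF assms] by simp
  also have "\<dots> \<le> (N x)\<^sup>2" unfolding N_eq using S2_nonneg[OF assms] by (intro power_mono) auto
  finally show ?thesis .
qed

lemma N_leI:
  assumes "x \<in> X" "0 \<le> C" "Sp x \<le> C powr p" "S2 x \<le> C\<^sup>2"
  shows "N x \<le> C"
proof -
  have "Sp x powr (1/p) \<le> (C powr p) powr (1/p)"
    using assms Sp_nonneg p1 by (intro powr_mono2) auto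
  also have "\<dots> = C" using assms p1 by (simp add: powr_powr)
  finally have 1: "Sp x powr (1/p) \<le> C" .
  have "sqrt (S2 x) \<le> C" using real_sqrt_le_mono[OF assms(4)] assms(2) by simp
  with 1 show ?thesis unfolding N_eq by simp
qed

lemma coord_le: assumes "x \<in> X" shows "\<bar>x n\<bar> \<le> N x"
proof -
  have "\<bar>x n\<bar> powr p \<le> Sp x"
    unfolding Sp_def using sum_le_suminf[OF XD(1)[OF assms], of "{n}"] by simp
  then have "(\<bar>x n\<bar> powr p) powr (1/p) \<le> Sp x powr (1/p)"
    using p1 by (intro powr_mono2) auto
  then have "\<bar>x n\<bar> \<le> Sp x powr (1/p)" using p1 by (simp add: powr_powr)
  then show ?thesis unfolding N_eq by simp
qed

lemma dominated:
  assumes x: "x \<in> X" and le: "\<And>n. \<bar>y n\<bar> \<le> \<bar>x n\<bar>"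
  shows "y \<in> X" "Sp y \<le> Sp x" "S2 y \<le> S2 x" "N y \<le> N x"
proof -
  have a: "\<bar>y n\<bar> powr p \<le> \<bar>x n\<bar> powr p" for n using le p1 by (intro powr_mono2) auto
  have b: "(y n * w n)\<^sup>2 \<le> (x n * w n)\<^sup>2" for n
    using le wpos[of n] by (simp add: power_mult_distrib abs_le_square_iff mult_right_mono)
  have sa: "summable (\<lambda>n. \<bar>y n\<bar> powr p)"
    by (rule summable_comparison_test[OF _ XD(1)[OF x]]) (use a in auto)
  have sb: "summable (\<lambda>n. (y n * w n)\<^sup>2)"
    by (rule summable_comparison_test[OF _ XD(2)[OF x]]) (use b in auto)
  show "y \<in> X" using sa sb by (simp add: X_iff)
  show 1: "Sp y \<le> Sp x" unfolding Sp_def by (rule suminf_le[OF a sa XD(1)[OF x]])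
  show 2: "S2 y \<le> S2 x" unfolding S2_def by (rule suminf_le[OF b sb XD(2)[OF x]])
  have "Sp y powr (1/p) \<le> Sp x powr (1/p)"
    using 1 Sp_nonneg \<open>y \<in> X\<close> p1 by (intro powr_mono2) auto
  moreover have "sqrt (S2 y) \<le> sqrt (S2 x)" using 2 by (rule real_sqrt_le_mono)
  ultimately show "N y \<le> N x" unfolding N_eq by (rule max.mono)
qed

lemma scale:
  assumes x: "x \<in> X"
  shows "(\<lambda>n. c * x n) \<in> X" "N (\<lambda>n. c * x n) = \<bar>c\<bar> * N x"
proof -
  have a: "\<bar>c * x n\<bar> powr p = \<bar>c\<bar> powr p * \<bar>x n\<bar> powr p" for n by (simp add: abs_mult powr_mult)
  have b: "(c * x n * w n)\<^sup>2 = c\<^sup>2 * (x n * w n)\<^sup>2" for n by (simp add: power_mult_distrib)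
  show "(\<lambda>n. c * x n) \<in> X" using XD[OF x] unfolding X_iff a b by (intro conjI summable_mult)
  have "Sp (\<lambda>n. c * x n) = \<bar>c\<bar> powr p * Sp x" unfolding Sp_def a
    by (rule suminf_mult[OF XD(1)[OF x]])
  then have 1: "Sp (\<lambda>n. c * x n) powr (1/p) = \<bar>c\<bar> * Sp x powr (1/p)"
    using p1 by (simp add: powr_mult powr_powr)
  have "S2 (\<lambda>n. c * x n) = c\<^sup>2 * S2 x" unfolding S2_def b
    by (rule suminf_mult[OF XD(2)[OF x]])
  then have 2: "sqrt (S2 (\<lambda>n. c * x n)) = \<bar>c\<bar> * sqrt (S2 x)" by (simp add: real_sqrt_mult)
  show "N (\<lambda>n. c * x n) = \<bar>c\<bar> * N x" unfolding N_eq 1 2 by (simp add: max_mult_distrib_left)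
qed

lemma add:
  assumes x: "x \<in> X" and y: "y \<in> X"
  shows "(\<lambda>n. x n + y n) \<in> X" "N (\<lambda>n. x n + y n) \<le> N x + N y"
proof -
  note m1 = minkowski[OF p1(1) XD(1)[OF x] XD(1)[OF y]]
  have xw: "summable (\<lambda>n. \<bar>x n * w n\<bar> powr 2)" "summable (\<lambda>n. \<bar>y n * w n\<bar> powr 2)"
    using XD(2)[OF x] XD(2)[OF y] by simp_all
  note m2 = minkowski[of 2, OF _ xw]
  have e: "\<bar>x n * w n + y n * w n\<bar> powr 2 = ((x n + y n) * w n)\<^sup>2" for n
    by (simp add: algebra_simps)
  show xy: "(\<lambda>n. x n + y n) \<in> X" using m1 m2 unfolding X_iff e by simp
  have 1: "Sp (\<lambda>n. x n + y n) powr (1/p) \<le> N x + N y"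
    using m1 unfolding Sp_def[symmetric] N_eq
    by (smt (verit, ccfv_threshold) Sp_def max.cobounded1)
  have sq: "sqrt z = z powr (1/2)" if "z \<ge> 0" for z :: real using that by (simp add: powr_half_sqrt)
  have 2: "sqrt (S2 (\<lambda>n. x n + y n)) \<le> N x + N y"
  proof -
    have "sqrt (S2 (\<lambda>n. x n + y n)) = (\<Sum>n. \<bar>x n * w n + y n * w n\<bar> powr 2) powr (1/2)"
      unfolding S2_def e using S2_nonneg[OF xy] by (simp add: S2_def powr_half_sqrt)
    also have "\<dots> \<le> (\<Sum>n. \<bar>x n * w n\<bar> powr 2) powr (1/2) + (\<Sum>n. \<bar>y n * w n\<bar> powr 2) powr (1/2)"
      using m2 by simp
    also have "\<dots> = sqrt (S2 x) + sqrt (S2 y)"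
      using S2_nonneg[OF x] S2_nonneg[OF y] by (simp add: S2_def powr_half_sqrt)
    also have "\<dots> \<le> N x + N y" unfolding N_eq by (intro add_mono) auto
    finally show ?thesis .
  qed
  show "N (\<lambda>n. x n + y n) \<le> N x + N y" using 1 2 unfolding N_eq[of "\<lambda>n. x n + y n"] by simp
qed

end

context xpw begin

lemma zero_X: "(\<lambda>n. 0) \<in> X" and N_zero: "N (\<lambda>n. 0) = 0"
  by (simp_all add: X_iff N_eq Sp_def S2_def)

lemma diff:
  assumes x: "x \<in> X" and y: "y \<in> X"
  shows "(\<lambda>n. x n - y n) \<in> X" "N (\<lambda>n. x n - y n) \<le> N x + N y"
proof -
  have "(\<lambda>n. (-1) * y n) \<in> X" "N (\<lambda>n. (-1) * y n) = N y" using scale[OF y, of "-1"] by auto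
  from add[OF x this(1)] this(2) show "(\<lambda>n. x n - y n) \<in> X" "N (\<lambda>n. x n - y n) \<le> N x + N y" by simp_all
qed

lemma finsupp_X: assumes "\<And>n. n \<ge> M \<Longrightarrow> x n = 0" shows "x \<in> X"
proof -
  have "summable (\<lambda>n. \<bar>x n\<bar> powr p)"
    by (rule summable_finite[of "{..<M}"]) (auto simp: assms not_less)
  moreover have "summable (\<lambda>n. (x n * w n)\<^sup>2)"
    by (rule summable_finite[of "{..<M}"]) (auto simp: assms not_less)
  ultimately
  show ?thesis by (simp add: X_iff)
qed

lemma unit_X: "unit_vec k \<in> X"
  by (rule finsupp_X[of "Suc k"]) (simp add: unit_vec_def)

lemma X_sum:
  assumes "finite I" "\<And>i. i \<in> I \<Longrightarrow> f i \<in> X"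
  shows "(\<lambda>n. \<Sum>i\<in>I. f i n) \<in> X \<and> N (\<lambda>n. \<Sum>i\<in>I. f i n) \<le> (\<Sum>i\<in>I. N (f i))"
  using assms
proof (induction I rule: finite_induct)
  case empty
  then show ?case using zero_X N_zero by simp
next
  case (insert i I)
  then have IH: "(\<lambda>n. \<Sum>i\<in>I. f i n) \<in> X" "N (\<lambda>n. \<Sum>i\<in>I. f i n) \<le> (\<Sum>i\<in>I. N (f i))" by auto
  have fi: "f i \<in> X" using insert by auto
  have e: "(\<lambda>n. \<Sum>i\<in>insert i I. f i n) = (\<lambda>n. f i n + (\<Sum>i\<in>I. f i n))" using insert by simp
  show ?case unfolding e using add[OF fi IH(1)] IH(2) insert(1,2) by simp
qed

lemma fatou:
  assumes xs: "\<And>M. xs M \<in> X" and bd: "\<And>M. N (xs M) \<le> C"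
    and lim: "\<And>n. (\<lambda>M. xs M n) \<longlonglongrightarrow> x n"
  shows "x \<in> X" "N x \<le> C"
proof -
  have C0: "0 \<le> C" using bd[of 0] N_nonneg[of "xs 0"] by linarith
  have A: "(\<Sum>n<K. \<bar>x n\<bar> powr p) \<le> C powr p" for K
  proof -
    have "(\<lambda>M. \<Sum>n<K. \<bar>xs M n\<bar> powr p) \<longlonglongrightarrow> (\<Sum>n<K. \<bar>x n\<bar> powr p)"
      using p1 by (intro tendsto_sum tendsto_powr' tendsto_rabs lim tendsto_const) auto
    moreover have "(\<Sum>n<K. \<bar>xs M n\<bar> powr p) \<le> C powr p" for M
    proof -
      have "(\<Sum>n<K. \<bar>xs M n\<bar> powr p) \<le> Sp (xs M)"
        unfolding Sp_def by (rule sum_le_suminf[OF XD(1)[OF xs]]) auto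
      also have "\<dots> \<le> N (xs M) powr p" by (rule Sp_le_N[OF xs])
      also have "\<dots> \<le> C powr p" using bd p1 N_nonneg by (intro powr_mono2) auto
      finally show ?thesis .
    qed
    ultimately show ?thesis by (intro LIMSEQ_le_const2[of _ "\<Sum>n<K. \<bar>x n\<bar> powr p"]) auto
  qed
  have B: "(\<Sum>n<K. (x n * w n)\<^sup>2) \<le> C\<^sup>2" for K
  proof -
    have "(\<lambda>M. \<Sum>n<K. (xs M n * w n)\<^sup>2) \<longlonglongrightarrow> (\<Sum>n<K. (x n * w n)\<^sup>2)"
      by (intro tendsto_sum tendsto_power tendsto_mult lim tendsto_const)
    moreover have "(\<Sum>n<K. (xs M n * w n)\<^sup>2) \<le> C\<^sup>2" for M
    proof -
      have "(\<Sum>n<K. (xs M n * w n)\<^sup>2) \<le> S2 (xs M)"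
        unfolding S2_def by (rule sum_le_suminf[OF XD(2)[OF xs]]) auto
      also have "\<dots> \<le> (N (xs M))\<^sup>2" by (rule S2_le_N[OF xs])
      also have "\<dots> \<le> C\<^sup>2" using bd N_nonneg by (intro power_mono) auto
      finally show ?thesis .
    qed
    ultimately show ?thesis by (intro LIMSEQ_le_const2[of _ "\<Sum>n<K. (x n * w n)\<^sup>2"]) auto
  qed
  have s1: "summable (\<lambda>n. \<bar>x n\<bar> powr p)"
    by (rule bounded_imp_summable[of _ "C powr p"]) (simp, metis A lessThan_Suc_atMost)
  have s2: "summable (\<lambda>n. (x n * w n)\<^sup>2)"
    by (rule bounded_imp_summable[of _ "C\<^sup>2"]) (simp, metis B lessThan_Suc_atMost)
  show xX: "x \<in> X" using s1 s2 by (simp add: X_iff)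
  show "N x \<le> C"
    by (rule N_leI[OF xX C0]) (unfold Sp_def S2_def, (rule suminf_le_const; use s1 s2 A B in auto)+)
qed

lemma trunc_X: assumes "x \<in> X"
  shows "(\<lambda>n. if n < M then x n else 0) \<in> X" "N (\<lambda>n. if n < M then x n else 0) \<le> N x"
    "(\<lambda>n. if n < M then 0 else x n) \<in> X" "N (\<lambda>n. if n < M then 0 else x n) \<le> N x"
  by (rule dominated[OF assms]; simp)+

lemma tail_suminf:
  fixes f :: "nat \<Rightarrow> real"
  assumes "summable f"
  shows "summable (\<lambda>n. if n < M then 0 else f n)" "(\<Sum>n. if n < M then 0 else f n) = suminf f - (\<Sum>i<M. f i)"
proof -
  have e: "(\<lambda>n. if n < M then 0 else f n) = (\<lambda>n. f n - (if n \<in> {..<M} then f n else 0))" by auto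
  have "(\<lambda>n. if n < M then 0 else f n) sums (suminf f - (\<Sum>i<M. f i))"
    unfolding e by (intro sums_diff summable_sums assms sums_If_finite_set) auto
  then show "summable (\<lambda>n. if n < M then 0 else f n)" "(\<Sum>n. if n < M then 0 else f n) = suminf f - (\<Sum>i<M. f i)"
    by (auto simp: sums_iff)
qed

lemma tail_to_0: assumes "summable f"
  shows "(\<lambda>M. \<Sum>n. if n < M then 0 else (f n::real)) \<longlonglongrightarrow> 0"
proof -
  have "(\<lambda>M. suminf f - (\<Sum>i<M. f i)) \<longlonglongrightarrow> suminf f - suminf f"
    by (intro tendsto_diff tendsto_const summable_LIMSEQ assms)
  then show ?thesis by (simp add: tail_suminf[OF assms])
qed

lemma tail_N: assumes x: "x \<in> X"
  shows "(\<lambda>M. N (\<lambda>n. if n < M then 0 else x n)) \<longlonglongrightarrow> 0"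
proof -
  define t where "t M = (\<lambda>n. if n < M then 0 else x n)" for M
  have tX: "t M \<in> X" for M unfolding t_def by (rule trunc_X[OF x])
  have sp: "Sp (t M) = (\<Sum>n. if n < M then 0 else \<bar>x n\<bar> powr p)" for M
    unfolding Sp_def t_def by (rule arg_cong[where f=suminf]) auto
  have s2: "S2 (t M) = (\<Sum>n. if n < M then 0 else (x n * w n)\<^sup>2)" for M
    unfolding S2_def t_def by (rule arg_cong[where f=suminf]) auto
  have f0: "(\<lambda>M. Sp (t M)) \<longlonglongrightarrow> 0" unfolding sp by (rule tail_to_0[OF XD(1)[OF x]])
  have l1: "(\<lambda>M. Sp (t M) powr (1/p)) \<longlonglongrightarrow> 0 powr (1/p)"
    by (rule tendsto_powr'[OF f0 tendsto_const]) (use p1 Sp_nonneg[OF tX] in auto)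
  have g0: "(\<lambda>M. S2 (t M)) \<longlonglongrightarrow> 0" unfolding s2 by (rule tail_to_0[OF XD(2)[OF x]])
  have l2: "(\<lambda>M. sqrt (S2 (t M))) \<longlonglongrightarrow> sqrt 0"
    by (rule tendsto_real_sqrt[OF g0])
  have h: "(\<lambda>M. Sp (t M) powr (1/p) + sqrt (S2 (t M))) \<longlonglongrightarrow> 0"
    using tendsto_add[OF l1 l2] by simp
  have le: "N (t M) \<le> Sp (t M) powr (1/p) + sqrt (S2 (t M))" for M
  proof -
    have "0 \<le> sqrt (S2 (t M))" using S2_nonneg[OF tX] by simp
    then show ?thesis unfolding N_eq by simp
  qed
  have "(\<lambda>M. N (t M)) \<longlonglongrightarrow> 0"
    by (rule tendsto_sandwich[OF always_eventually always_eventually tendsto_const h])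
       (use le N_nonneg in auto)
  then show ?thesis by (simp add: t_def)
qed

end

context xpw begin

abbreviation "bop T \<equiv> bounded_op_Xpw p w T"

lemma bopD:
  assumes "bop T"
  shows "x \<in> X \<Longrightarrow> T x \<in> X"
    "x \<in> X \<Longrightarrow> y \<in> X \<Longrightarrow> T (\<lambda>k. x k + y k) = (\<lambda>k. T x k + T y k)"
    "x \<in> X \<Longrightarrow> T (\<lambda>k. c * x k) = (\<lambda>k. c * T x k)"
  using assms unfolding bounded_op_Xpw_def by auto

lemma bop_bound:
  assumes "bop T" obtains K where "K \<ge> 0" "\<And>x. x \<in> X \<Longrightarrow> N (T x) \<le> K * N x"
proof -
  obtain C where C: "\<forall>x\<in>X. N (T x) \<le> C * N x" using assms unfolding bounded_op_Xpw_def by auto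
  show ?thesis
  proof (rule that[of "max C 0"])
    fix x assume "x \<in> X"
    then have "N (T x) \<le> C * N x" using C by auto
    also have "\<dots> \<le> max C 0 * N x" using N_nonneg by (intro mult_right_mono) auto
    finally show "N (T x) \<le> max C 0 * N x" .
  qed simp
qed

lemma bopI:
  assumes "\<And>x. x \<in> X \<Longrightarrow> T x \<in> X"
    "\<And>x y. x \<in> X \<Longrightarrow> y \<in> X \<Longrightarrow> T (\<lambda>k. x k + y k) = (\<lambda>k. T x k + T y k)"
    "\<And>x c. x \<in> X \<Longrightarrow> T (\<lambda>k. c * x k) = (\<lambda>k. c * T x k)"
    "\<And>x. x \<in> X \<Longrightarrow> N (T x) \<le> K * N x"
  shows "bop T"
  using assms unfolding bounded_op_Xpw_def by blast

lemma bop_zero: assumes "bop T" shows "T (\<lambda>k. 0) = (\<lambda>k. 0)"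
  using bopD(3)[OF assms zero_X, of 0] by simp

lemma bop_scale: assumes "bop T" "x \<in> X" shows "T (\<lambda>k. c * x k) = (\<lambda>k. c * T x k)"
  using bopD(3)[OF assms] by simp

lemma bop_diff: assumes T: "bop T" and x: "x \<in> X" and y: "y \<in> X"
  shows "T (\<lambda>k. x k - y k) = (\<lambda>k. T x k - T y k)"
proof -
  have my: "(\<lambda>k. (-1) * y k) \<in> X" by (rule scale[OF y])
  have "T (\<lambda>k. x k - y k) = T (\<lambda>k. x k + (-1) * y k)" by simp
  also have "\<dots> = (\<lambda>k. T x k + T (\<lambda>k. (-1) * y k) k)" by (rule bopD(2)[OF T x my])
  also have "\<dots> = (\<lambda>k. T x k - T y k)" using bopD(3)[OF T y, of "-1"] by simp
  finally show ?thesis .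
qed

lemma bop_sum:
  assumes T: "bop T" and "finite I" and f: "\<And>i. i \<in> I \<Longrightarrow> f i \<in> X"
  shows "T (\<lambda>k. \<Sum>i\<in>I. c i * f i k) = (\<lambda>k. \<Sum>i\<in>I. c i * T (f i) k)"
  using assms(2) f
proof (induction I rule: finite_induct)
  case empty
  then show ?case using bop_zero[OF T] by simp
next
  case (insert i I)
  have fi: "(\<lambda>k. c i * f i k) \<in> X" using insert scale by auto
  have fI: "(\<lambda>k. \<Sum>i\<in>I. c i * f i k) \<in> X"
    using X_sum[of I "\<lambda>i k. c i * f i k"] insert scale by auto
  have "T (\<lambda>k. \<Sum>i\<in>insert i I. c i * f i k) = T (\<lambda>k. c i * f i k + (\<Sum>i\<in>I. c i * f i k))"
    using insert by simp
  also have "\<dots> = (\<lambda>k. T (\<lambda>k. c i * f i k) k + T (\<lambda>k. \<Sum>i\<in>I. c i * f i k) k)"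
    by (rule bopD(2)[OF T fi fI])
  also have "\<dots> = (\<lambda>k. c i * T (f i) k + (\<Sum>i\<in>I. c i * T (f i) k))"
    using insert bopD(3)[OF T, of "f i" "c i"] by simp
  finally show ?case using insert by simp
qed

lemma bop_comp: assumes A: "bop A" and B: "bop B" shows "bop (\<lambda>x. A (B x))"
proof -
  obtain KA where KA: "KA \<ge> 0" "\<And>x. x \<in> X \<Longrightarrow> N (A x) \<le> KA * N x" using bop_bound[OF A] by blast
  obtain KB where KB: "KB \<ge> 0" "\<And>x. x \<in> X \<Longrightarrow> N (B x) \<le> KB * N x" using bop_bound[OF B] by blast
  show ?thesis
  proof (rule bopI[where K="KA * KB"])
    fix x assume x: "x \<in> X"
    show "A (B x) \<in> X" using bopD(1)[OF A bopD(1)[OF B x]] .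
    have "N (A (B x)) \<le> KA * N (B x)" using KA bopD(1)[OF B x] by auto
    also have "\<dots> \<le> KA * (KB * N x)" using KA KB x by (intro mult_left_mono) auto
    finally show "N (A (B x)) \<le> KA * KB * N x" by simp
  next
    fix x y assume x: "x \<in> X" and y: "y \<in> X"
    show "A (B (\<lambda>k. x k + y k)) = (\<lambda>k. A (B x) k + A (B y) k)"
      using bopD(2)[OF B x y] bopD(2)[OF A bopD(1)[OF B x] bopD(1)[OF B y]] by simp
  next
    fix x c assume x: "x \<in> X"
    show "A (B (\<lambda>k. c * x k)) = (\<lambda>k. c * A (B x) k)"
      using bopD(3)[OF B x] bopD(3)[OF A bopD(1)[OF B x]] by simp
  qed
qed

lemma bop_cont:
  assumes T: "bop T" and x: "x \<in> X" and xs: "\<And>M. xs M \<in> X"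
    and lim: "(\<lambda>M. N (\<lambda>k. xs M k - x k)) \<longlonglongrightarrow> 0"
  shows "(\<lambda>M. T (xs M) n) \<longlonglongrightarrow> T x n"
proof -
  obtain K where K: "K \<ge> 0" "\<And>x. x \<in> X \<Longrightarrow> N (T x) \<le> K * N x" using bop_bound[OF T] by blast
  have le: "\<bar>T (xs M) n - T x n\<bar> \<le> K * N (\<lambda>k. xs M k - x k)" for M
  proof -
    have d: "(\<lambda>k. xs M k - x k) \<in> X" by (rule diff(1)[OF xs x])
    have "\<bar>T (xs M) n - T x n\<bar> = \<bar>T (\<lambda>k. xs M k - x k) n\<bar>" using bop_diff[OF T xs x] by simp
    also have "\<dots> \<le> N (T (\<lambda>k. xs M k - x k))" by (rule coord_le[OF bopD(1)[OF T d]])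
    also have "\<dots> \<le> K * N (\<lambda>k. xs M k - x k)" by (rule K(2)[OF d])
    finally show ?thesis .
  qed
  have "(\<lambda>M. K * N (\<lambda>k. xs M k - x k)) \<longlonglongrightarrow> K * 0" by (intro tendsto_mult tendsto_const lim)
  have "(\<lambda>M. T (xs M) n - T x n) \<longlonglongrightarrow> 0"
  proof (rule Lim_null_comparison[where g="\<lambda>M. K * N (\<lambda>k. xs M k - x k)"])
    show "\<forall>\<^sub>F M in sequentially. norm (T (xs M) n - T x n) \<le> K * N (\<lambda>k. xs M k - x k)"
      using le by (intro always_eventually allI) simp
  qed (use \<open>(\<lambda>M. K * N (\<lambda>k. xs M k - x k)) \<longlonglongrightarrow> K * 0\<close> in simp)
  then show ?thesis by (simp add: LIM_zero_iff)
qed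

lemma bop_id: "bop (\<lambda>x. x)"
  by (rule bopI[where K=1]) auto

lemma neumann:
  assumes E: "bop E" and Eq: "\<And>x. x \<in> X \<Longrightarrow> N (E x) \<le> q * N x" and q: "0 \<le> q" "q < 1"
  shows "\<exists>R. bop R \<and> (\<forall>x\<in>X. R (\<lambda>k. x k + E x k) = x)"
proof -
  define F where "F z = (\<lambda>k. (-1) * E z k)" for z
  have F: "bop F"
  proof (rule bopI[where K=q])
    fix x assume x: "x \<in> X"
    show "F x \<in> X" unfolding F_def by (rule scale(1)[OF bopD(1)[OF E x]])
    show "N (F x) \<le> q * N x" unfolding F_def using scale(2)[OF bopD(1)[OF E x], of "-1"] Eq[OF x] by simp
    show "F (\<lambda>k. c * x k) = (\<lambda>k. c * F x k)" for c unfolding F_def using bopD(3)[OF E x, of c] by simp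
  next
    fix x y assume x: "x \<in> X" and y: "y \<in> X"
    show "F (\<lambda>k. x k + y k) = (\<lambda>k. F x k + F y k)" unfolding F_def using bopD(2)[OF E x y] by simp
  qed
  have FN: "y \<in> X \<Longrightarrow> N (F y) \<le> q * N y" for y
    unfolding F_def using scale(2)[OF bopD(1)[OF E], of y "-1"] Eq by simp
  have G: "bop (F^^n)" for n
  proof (induction n)
    case 0 then show ?case using bop_id by (simp add: id_def)
  next
    case (Suc n)
    have "F ^^ Suc n = (\<lambda>x. F ((F^^n) x))" by auto
    then show ?case using bop_comp[OF F Suc] by simp
  qed
  have GX: "x \<in> X \<Longrightarrow> (F^^n) x \<in> X" for x n using bopD(1)[OF G] .
  have bd: "x \<in> X \<Longrightarrow> N ((F^^n) x) \<le> q^n * N x" for x n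
  proof (induction n)
    case 0 then show ?case by simp
  next
    case (Suc n)
    have "N ((F^^Suc n) x) = N (F ((F^^n) x))" by simp
    also have "\<dots> \<le> q * N ((F^^n) x)" by (rule FN[OF GX[OF Suc(2)]])
    also have "\<dots> \<le> q * (q^n * N x)" using Suc q by (intro mult_left_mono) auto
    finally show ?case by simp
  qed
  have cb: "x \<in> X \<Longrightarrow> \<bar>(F^^n) x k\<bar> \<le> q^n * N x" for x n k
    using coord_le[OF GX, of x n k] bd[of x n] by linarith
  have summ: "x \<in> X \<Longrightarrow> summable (\<lambda>n. (F^^n) x k)" for x k
    by (rule summable_comparison_test[where g="\<lambda>n. q^n * N x"])
       (use cb q in \<open>auto intro!: summable_mult2 summable_geometric\<close>)
  define R where "R x = (\<lambda>k. \<Sum>n. (F^^n) x k)" for x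
  have RX: "R x \<in> X \<and> N (R x) \<le> (1 / (1 - q)) * N x" if x: "x \<in> X" for x
  proof -
    define xs where "xs M = (\<lambda>k. \<Sum>n<M. (F^^n) x k)" for M
    have xsX: "xs M \<in> X \<and> N (xs M) \<le> (\<Sum>n<M. N ((F^^n) x))" for M
      unfolding xs_def by (rule X_sum) (use GX x in auto)
    have "N (xs M) \<le> (1 / (1 - q)) * N x" for M
    proof -
      have "N (xs M) \<le> (\<Sum>n<M. N ((F^^n) x))" using xsX[of M] by simp
      also have "\<dots> \<le> (\<Sum>n<M. q^n * N x)" by (rule sum_mono) (rule bd[OF x])
      also have "\<dots> = (\<Sum>n<M. q^n) * N x" by (simp add: sum_distrib_right)
      also have "(\<Sum>n<M. q^n) \<le> 1 / (1 - q)"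
        using q by (simp add: sum_gp_strict divide_right_mono)
      then have "(\<Sum>n<M. q^n) * N x \<le> (1 / (1 - q)) * N x" using N_nonneg by (intro mult_right_mono) auto
      finally show ?thesis .
    qed
    moreover have "(\<lambda>M. xs M k) \<longlonglongrightarrow> R x k" for k
      unfolding xs_def R_def by (rule summable_LIMSEQ[OF summ[OF x]])
    ultimately show ?thesis using fatou[of xs "1 / (1 - q) * N x" "R x"] xsX by simp
  qed
  have Rbop: "bop R"
  proof (rule bopI[where K="1 / (1 - q)"])
    fix x assume x: "x \<in> X"
    show "R x \<in> X" "N (R x) \<le> 1 / (1 - q) * N x" using RX[OF x] by auto
    show "R (\<lambda>k. c * x k) = (\<lambda>k. c * R x k)" for c
      unfolding R_def using bopD(3)[OF G x, of _ c] suminf_mult[OF summ[OF x]] by simp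
  next
    fix x y assume x: "x \<in> X" and y: "y \<in> X"
    show "R (\<lambda>k. x k + y k) = (\<lambda>k. R x k + R y k)"
      unfolding R_def using bopD(2)[OF G x y] suminf_add[OF summ[OF x] summ[OF y]] by simp
  qed
  have inv: "R (\<lambda>k. x k + E x k) = x" if x: "x \<in> X" for x
  proof -
    have FX: "F x \<in> X" using bopD(1)[OF F x] .
    have e1: "(\<lambda>k. x k + E x k) = (\<lambda>k. x k - F x k)" unfolding F_def by simp
    have e2: "(F^^n) (\<lambda>k. x k + E x k) = (\<lambda>k. (F^^n) x k - (F^^Suc n) x k)" for n
      unfolding e1 bop_diff[OF G x FX] by (simp add: funpow_Suc_right del: funpow.simps)
    have lim0: "(\<lambda>n. (F^^n) x k) \<longlonglongrightarrow> 0" for k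
    proof (rule Lim_null_comparison[where g="\<lambda>n. q^n * N x"])
      show "\<forall>\<^sub>F n in sequentially. norm ((F^^n) x k) \<le> q^n * N x"
        using cb[OF x] by (intro always_eventually allI) simp
      show "(\<lambda>n. q^n * N x) \<longlonglongrightarrow> 0" using q
        by (metis LIMSEQ_power_zero abs_of_nonneg mult_zero_left real_norm_def tendsto_mult_right)
    qed
    show ?thesis
    proof
      fix k
      have "(\<lambda>n. (F^^n) x k - (F^^Suc n) x k) sums ((F^^0) x k - 0)"
        by (rule telescope_sums'[OF lim0])
      then show "R (\<lambda>k. x k + E x k) k = x k" unfolding R_def e2 by (simp add: sums_iff)
    qed
  qed
  show ?thesis using Rbop inv by blast
qed

end

primrec gr :: "(nat \<Rightarrow> nat \<Rightarrow> real) \<Rightarrow> nat \<Rightarrow> nat \<Rightarrow> real" where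
  "gr H 0 = (\<lambda>_. 1)"
| "gr H (Suc i) = (gr H i)(i := (if 0 \<le> (\<Sum>j<i. gr H i j * H i j) then 1 else -1))"

definition greedy :: "(nat \<Rightarrow> nat \<Rightarrow> real) \<Rightarrow> nat \<Rightarrow> real" where
  "greedy H i = gr H (Suc i) i"

lemma gr_stable: "j < i \<Longrightarrow> gr H i j = greedy H j"
proof (induction i)
  case 0 then show ?case by simp
next
  case (Suc i)
  then show ?case by (cases "j = i") (auto simp: greedy_def)
qed

lemma greedy_sq: "greedy H i * greedy H i = 1"
  by (simp add: greedy_def)

lemma greedy_abs: "\<bar>greedy H i\<bar> = 1"
  by (simp add: greedy_def)

lemma greedy_key:
  fixes G :: "nat \<Rightarrow> nat \<Rightarrow> real"
  defines "H \<equiv> \<lambda>i j. G i j + G j i"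
  shows "(\<Sum>i<n. G i i) \<le> (\<Sum>i<n. \<Sum>j<n. greedy H i * greedy H j * G i j)"
proof (induction n)
  case 0 then show ?case by simp
next
  case (Suc n)
  define e where "e = greedy H"
  define S where "S = (\<Sum>j<n. e j * H n j)"
  have en: "e n = (if 0 \<le> S then 1 else -1)"
  proof -
    have "(\<Sum>j<n. gr H n j * H n j) = S" unfolding S_def e_def
      by (rule sum.cong) (simp_all add: gr_stable)
    then show ?thesis unfolding e_def greedy_def by simp
  qed
  have pos: "0 \<le> e n * S" unfolding en by auto
  have a: "(\<Sum>i<Suc n. \<Sum>j<Suc n. e i * e j * G i j)
      = (\<Sum>i<n. \<Sum>j<n. e i * e j * G i j) + (\<Sum>i<n. e i * e n * G i n)
        + (\<Sum>j<n. e n * e j * G n j) + e n * e n * G n n"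
    by (simp add: sum.distrib)
  have b: "(\<Sum>i<n. e i * e n * G i n) + (\<Sum>j<n. e n * e j * G n j) = e n * S"
    unfolding S_def H_def by (simp add: sum_distrib_left sum.distrib[symmetric] algebra_simps)
  have c: "e n * e n = 1" unfolding e_def by (rule greedy_sq)
  have "(\<Sum>i<Suc n. \<Sum>j<Suc n. e i * e j * G i j)
      = (\<Sum>i<n. \<Sum>j<n. e i * e j * G i j) + e n * S + G n n" using a b c by simp
  then show ?case using Suc pos unfolding e_def by simp
qed

lemma sum_single:
  fixes g :: "'a \<Rightarrow> real" and \<phi> :: "real \<Rightarrow> real"
  assumes I: "finite I" and d: "\<And>i j. i \<in> I \<Longrightarrow> j \<in> I \<Longrightarrow> i \<noteq> j \<Longrightarrow> g i = 0 \<or> g j = 0"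
    and z: "\<phi> 0 = 0"
  shows "\<phi> (\<Sum>i\<in>I. g i) = (\<Sum>i\<in>I. \<phi> (g i))"
proof (cases "\<exists>i\<in>I. g i \<noteq> 0")
  case False
  then show ?thesis using z by simp
next
  case True
  then obtain i0 where i0: "i0 \<in> I" "g i0 \<noteq> 0" by blast
  have oth: "i \<in> I - {i0} \<Longrightarrow> g i = 0" for i using d[of i0 i] i0 by auto
  have "(\<Sum>i\<in>I. g i) = g i0 + (\<Sum>i\<in>I - {i0}. g i)" by (rule sum.remove[OF I i0(1)])
  also have "(\<Sum>i\<in>I - {i0}. g i) = 0" using oth by simp
  finally have 1: "(\<Sum>i\<in>I. g i) = g i0" by simp
  have "(\<Sum>i\<in>I. \<phi> (g i)) = \<phi> (g i0) + (\<Sum>i\<in>I - {i0}. \<phi> (g i))" by (rule sum.remove[OF I i0(1)])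
  also have "(\<Sum>i\<in>I - {i0}. \<phi> (g i)) = 0" using oth z by simp
  finally show ?thesis using 1 by simp
qed

context xpw begin

lemma disj_sum:
  assumes I: "finite I" and f: "\<And>i. i \<in> I \<Longrightarrow> f i \<in> X"
    and d: "\<And>i j n. i \<in> I \<Longrightarrow> j \<in> I \<Longrightarrow> i \<noteq> j \<Longrightarrow> f i n = 0 \<or> f j n = 0"
  shows "Sp (\<lambda>n. \<Sum>i\<in>I. f i n) = (\<Sum>i\<in>I. Sp (f i))" "S2 (\<lambda>n. \<Sum>i\<in>I. f i n) = (\<Sum>i\<in>I. S2 (f i))"
proof -
  have a: "\<bar>\<Sum>i\<in>I. f i n\<bar> powr p = (\<Sum>i\<in>I. \<bar>f i n\<bar> powr p)" for n
    using sum_single[OF I, of "\<lambda>i. f i n" "\<lambda>x. \<bar>x\<bar> powr p"] d by simp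
  have b: "((\<Sum>i\<in>I. f i n) * w n)\<^sup>2 = (\<Sum>i\<in>I. (f i n * w n)\<^sup>2)" for n
  proof -
    have "((\<Sum>i\<in>I. f i n) * w n)\<^sup>2 = (\<Sum>i\<in>I. f i n * w n)\<^sup>2" by (simp add: sum_distrib_right)
    also have "\<dots> = (\<Sum>i\<in>I. (f i n * w n)\<^sup>2)"
      using sum_single[OF I, of "\<lambda>i. f i n * w n" "\<lambda>x. x\<^sup>2"] d by auto
    finally show ?thesis .
  qed
  show "Sp (\<lambda>n. \<Sum>i\<in>I. f i n) = (\<Sum>i\<in>I. Sp (f i))"
    unfolding Sp_def a by (rule suminf_sum) (use f XD in blast)
  show "S2 (\<lambda>n. \<Sum>i\<in>I. f i n) = (\<Sum>i\<in>I. S2 (f i))"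
    unfolding S2_def b by (rule suminf_sum) (use f XD in blast)
qed

lemma unit_scaled:
  shows "(\<lambda>n. c * unit_vec m n) \<in> X" "Sp (\<lambda>n. c * unit_vec m n) = \<bar>c\<bar> powr p"
    "S2 (\<lambda>n. c * unit_vec m n) = (c * w m)\<^sup>2"
proof -
  show "(\<lambda>n. c * unit_vec m n) \<in> X" by (rule scale(1)[OF unit_X])
  have "Sp (\<lambda>n. c * unit_vec m n) = (\<Sum>n\<in>{m}. \<bar>c * unit_vec m n\<bar> powr p)"
    unfolding Sp_def by (rule suminf_finite) (auto simp: unit_vec_def)
  then show "Sp (\<lambda>n. c * unit_vec m n) = \<bar>c\<bar> powr p" by (simp add: unit_vec_def)
  have "S2 (\<lambda>n. c * unit_vec m n) = (\<Sum>n\<in>{m}. (c * unit_vec m n * w n)\<^sup>2)"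
    unfolding S2_def by (rule suminf_finite) (auto simp: unit_vec_def)
  then show "S2 (\<lambda>n. c * unit_vec m n) = (c * w m)\<^sup>2" by (simp add: unit_vec_def)
qed

lemma unitcomb:
  assumes I: "finite I" and inj: "inj_on m I"
  shows "(\<lambda>n. \<Sum>i\<in>I. c i * unit_vec (m i) n) \<in> X"
    "Sp (\<lambda>n. \<Sum>i\<in>I. c i * unit_vec (m i) n) = (\<Sum>i\<in>I. \<bar>c i\<bar> powr p)"
    "S2 (\<lambda>n. \<Sum>i\<in>I. c i * unit_vec (m i) n) = (\<Sum>i\<in>I. (c i * w (m i))\<^sup>2)"
proof -
  show "(\<lambda>n. \<Sum>i\<in>I. c i * unit_vec (m i) n) \<in> X"
    using X_sum[OF I, of "\<lambda>i n. c i * unit_vec (m i) n"] unit_scaled by blast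
  have d: "c i * unit_vec (m i) n = 0 \<or> c j * unit_vec (m j) n = 0" if "i \<in> I" "j \<in> I" "i \<noteq> j" for i j n
    using inj that by (auto simp: unit_vec_def inj_on_def)
  show "Sp (\<lambda>n. \<Sum>i\<in>I. c i * unit_vec (m i) n) = (\<Sum>i\<in>I. \<bar>c i\<bar> powr p)"
    using disj_sum(1)[OF I, of "\<lambda>i n. c i * unit_vec (m i) n"] d unit_scaled by simp
  show "S2 (\<lambda>n. \<Sum>i\<in>I. c i * unit_vec (m i) n) = (\<Sum>i\<in>I. (c i * w (m i))\<^sup>2)"
    using disj_sum(2)[OF I, of "\<lambda>i n. c i * unit_vec (m i) n"] d unit_scaled by simp
qed

end

locale fact = xpw +
  fixes T :: "(nat \<Rightarrow> real) \<Rightarrow> nat \<Rightarrow> real" and \<delta> :: real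
  assumes Tb: "bop T" and dpos: "0 < \<delta>" and diag: "\<And>n. \<delta> \<le> \<bar>T (unit_vec n) n\<bar>"
    and dv: "\<not> summable (\<lambda>n. w n powr (2 * p / (p - 2)))"
begin

definition "r = 2 * p / (p - 2)"
definition "u n = w n powr r"

lemma r_pos: "r > 0" using p2 by (simp add: r_def)
lemma u_pos: "u n > 0" using wpos[of n] by (simp add: u_def)
lemma w2: "(w n)\<^sup>2 = u n powr (1 - 2/p)"
proof -
  have "r * (1 - 2/p) = 2" using p2 by (simp add: r_def field_simps)
  then have "u n powr (1 - 2/p) = w n powr 2" unfolding u_def using wpos[of n] by (simp add: powr_powr)
  then show ?thesis using wpos[of n] by simp
qed

lemma u_unbdd: "\<exists>l. B \<le> (\<Sum>i<l. u (s + i))"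
proof (rule ccontr)
  assume "\<not> ?thesis"
  then have b: "(\<Sum>i<l. u (s + i)) \<le> B" for l by (metis linorder_le_cases)
  have "summable (\<lambda>i. u (i + s))"
  proof (rule bounded_imp_summable[of _ B])
    show "0 \<le> u (n + s)" for n using u_pos[of "n+s"] by simp
    show "(\<Sum>i\<le>n. u (i + s)) \<le> B" for n
      using b[of "Suc n"] by (simp add: lessThan_Suc_atMost[symmetric] add.commute)
  qed
  then have "summable u" by simp
  moreover have "u = (\<lambda>n. w n powr (2 * p / (p - 2)))" by (rule ext) (simp add: u_def r_def)
  ultimately show False using dv by simp
qed

definition "L k s = (LEAST l. u k \<le> (\<Sum>i<l. u (s + i)))"
definition "Sb k s = (\<Sum>i<L k s. u (s + i))"

lemma L_props: "u k \<le> Sb k s" "0 < L k s" "Sb k s \<le> u k + u (s + L k s - 1)" "0 < Sb k s"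
proof -
  obtain l where l: "u k \<le> (\<Sum>i<l. u (s + i))" using u_unbdd by blast
  show 1: "u k \<le> Sb k s" unfolding Sb_def L_def by (rule LeastI[of _ l]) (rule l)
  show 2: "0 < L k s"
  proof (rule ccontr)
    assume "\<not> 0 < L k s"
    then have "Sb k s = 0" by (simp add: Sb_def)
    then show False using 1 u_pos[of k] by simp
  qed
  show "0 < Sb k s" using 1 u_pos[of k] by simp
  obtain m where m: "L k s = Suc m" using 2 gr0_implies_Suc by blast
  have "\<not> u k \<le> (\<Sum>i<m. u (s + i))" unfolding L_def
    by (rule not_less_Least) (use m in \<open>simp add: L_def\<close>)
  then have "(\<Sum>i<m. u (s + i)) < u k" by simp
  moreover have "Sb k s = (\<Sum>i<m. u (s + i)) + u (s + m)" by (simp add: Sb_def m)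
  ultimately show "Sb k s \<le> u k + u (s + L k s - 1)" using m by simp
qed

definition "sg n = sgn (T (unit_vec n) n)"
definition "lam k s i = Sb k s powr (-1/p) * u (s + i) powr (1/p)"
definition "mu k s i = sg (s + i) * Sb k s powr (1/p - 1) * u (s + i) powr (1 - 1/p)"
definition "Gm k s i j = mu k s i * lam k s j * T (unit_vec (s + j)) (s + i)"
definition "eps k s = greedy (\<lambda>i j. Gm k s i j + Gm k s j i)"
definition "bv k s = (\<lambda>n. \<Sum>i<L k s. (eps k s i * lam k s i) * unit_vec (s + i) n)"
definition "bst k s y = (\<Sum>i<L k s. eps k s i * mu k s i * y (s + i))"
definition "cc k s = bst k s (T (bv k s))"

lemma eps_abs: "\<bar>eps k s i\<bar> = 1" by (simp add: eps_def greedy_abs)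

lemma bv_X: "bv k s \<in> X" unfolding bv_def by (rule unitcomb) (auto simp: inj_on_def)

lemma bv_pt: "bv k s n = (if s \<le> n \<and> n < s + L k s then eps k s (n - s) * lam k s (n - s) else 0)"
proof -
  have "bv k s n = (\<Sum>i<L k s. if i = n - s \<and> s \<le> n then eps k s i * lam k s i else 0)"
    unfolding bv_def by (rule sum.cong) (auto simp: unit_vec_def)
  also have "\<dots> = (if s \<le> n \<and> n < s + L k s then eps k s (n - s) * lam k s (n - s) else 0)"
    by (cases "s \<le> n") (auto simp: sum.delta' conj_commute)
  finally show ?thesis .
qed

lemma cc_ge: "\<delta> \<le> cc k s"
proof -
  define l where "l = L k s"
  define G where "G = Gm k s"
  have Tbv: "T (bv k s) = (\<lambda>n. \<Sum>j<l. (eps k s j * lam k s j) * T (unit_vec (s + j)) n)"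
    unfolding bv_def l_def by (rule bop_sum[OF Tb]) (auto intro: unit_X)
  have "cc k s = (\<Sum>i<l. \<Sum>j<l. eps k s i * eps k s j * G i j)"
    unfolding cc_def bst_def Tbv l_def[symmetric] G_def Gm_def
    by (simp add: sum_distrib_left algebra_simps)
  moreover have "(\<Sum>i<l. G i i) \<le> (\<Sum>i<l. \<Sum>j<l. eps k s i * eps k s j * G i j)"
    unfolding eps_def G_def by (rule greedy_key)
  moreover have "\<delta> \<le> (\<Sum>i<l. G i i)"
  proof -
    have gi: "G i i = (1 / Sb k s) * (u (s + i) * \<bar>T (unit_vec (s + i)) (s + i)\<bar>)" for i
    proof -
      have e1: "Sb k s powr (1/p - 1) * Sb k s powr (-1/p) = 1 / Sb k s"
      proof -
        have "Sb k s powr (1/p - 1) * Sb k s powr (-1/p) = Sb k s powr ((1/p - 1) + (-1/p))"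
          by (rule powr_add[symmetric])
        also have "(1/p - 1) + (-1/p) = - 1" by simp
        finally show ?thesis using L_props(4)[of k s] by (simp add: powr_minus_divide)
      qed
      have e2: "u (s + i) powr (1 - 1/p) * u (s + i) powr (1/p) = u (s + i)"
        using u_pos[of "s + i"] by (simp add: powr_add[symmetric])
      have e3: "sg (s + i) * T (unit_vec (s + i)) (s + i) = \<bar>T (unit_vec (s + i)) (s + i)\<bar>"
        unfolding sg_def by (simp add: sgn_mult_abs abs_sgn)
      show ?thesis unfolding G_def Gm_def mu_def lam_def
        using e1 e2 e3 by (simp add: algebra_simps)
    qed
    have "(\<Sum>i<l. G i i) \<ge> (\<Sum>i<l. (1 / Sb k s) * (u (s + i) * \<delta>))"
      unfolding gi using L_props(4)[of k s] u_pos[THEN less_imp_le] diag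
      by (intro sum_mono mult_left_mono) auto
    also have "(\<Sum>i<l. (1 / Sb k s) * (u (s + i) * \<delta>)) = \<delta>"
    proof -
      have "(\<Sum>i<l. (1 / Sb k s) * (u (s + i) * \<delta>)) = (1 / Sb k s) * ((\<Sum>i<l. u (s + i)) * \<delta>)"
        by (simp add: sum_distrib_left sum_distrib_right)
      also have "(\<Sum>i<l. u (s + i)) = Sb k s" by (simp add: Sb_def l_def)
      finally show ?thesis using L_props(4)[of k s] by simp
    qed
    finally show ?thesis .
  qed
  ultimately show ?thesis by linarith
qed

lemma lam_nonneg: "0 \<le> lam k s i" by (simp add: lam_def)

lemma bv_Sp: "Sp (bv k s) = 1"
proof -
  have "Sp (bv k s) = (\<Sum>i<L k s. \<bar>eps k s i * lam k s i\<bar> powr p)"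
    unfolding bv_def by (rule unitcomb) (auto simp: inj_on_def)
  also have "\<dots> = (\<Sum>i<L k s. u (s + i) / Sb k s)"
  proof (rule sum.cong[OF refl])
    fix i
    have "\<bar>eps k s i * lam k s i\<bar> = lam k s i" by (simp add: abs_mult eps_abs lam_nonneg)
    moreover have "lam k s i powr p = u (s + i) / Sb k s"
    proof -
      have "lam k s i powr p = (Sb k s powr (-1/p)) powr p * (u (s + i) powr (1/p)) powr p"
        unfolding lam_def by (rule powr_mult; simp)
      also have "\<dots> = Sb k s powr (-1) * u (s + i) powr 1"
        unfolding powr_powr using p1 by simp
      finally show ?thesis using L_props(4)[of k s] u_pos[of "s+i"] by (simp add: powr_minus_divide)
    qed
    ultimately show "\<bar>eps k s i * lam k s i\<bar> powr p = u (s + i) / Sb k s" by simp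
  qed
  also have "\<dots> = 1" using L_props(4)[of k s] by (simp add: sum_divide_distrib[symmetric] Sb_def)
  finally show ?thesis .
qed

lemma bv_S2: "S2 (bv k s) = Sb k s powr (1 - 2/p)"
proof -
  have "S2 (bv k s) = (\<Sum>i<L k s. (eps k s i * lam k s i * w (s + i))\<^sup>2)"
    unfolding bv_def by (rule unitcomb) (auto simp: inj_on_def)
  also have "\<dots> = (\<Sum>i<L k s. Sb k s powr (-2/p) * u (s + i))"
  proof (rule sum.cong[OF refl])
    fix i
    have e: "(eps k s i)\<^sup>2 = 1" by (simp add: power2_eq_square eps_def greedy_sq)
    have l2: "(lam k s i)\<^sup>2 = Sb k s powr (-2/p) * u (s + i) powr (2/p)"
    proof -
      have "(lam k s i)\<^sup>2 = (Sb k s powr (-1/p) * Sb k s powr (-1/p)) * (u (s + i) powr (1/p) * u (s + i) powr (1/p))"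
        by (simp add: lam_def power2_eq_square algebra_simps)
      also have "Sb k s powr (-1/p) * Sb k s powr (-1/p) = Sb k s powr (-1/p + -1/p)"
        by (rule powr_add[symmetric])
      also have "u (s + i) powr (1/p) * u (s + i) powr (1/p) = u (s + i) powr (1/p + 1/p)"
        by (rule powr_add[symmetric])
      also have "-1/p + -1/p = -2/p" by simp
      also have "1/p + 1/p = 2/p" by simp
      finally show ?thesis .
    qed
    have "u (s + i) powr (2/p) * u (s + i) powr (1 - 2/p) = u (s + i)"
      using u_pos[of "s+i"] by (simp add: powr_add[symmetric])
    then show "(eps k s i * lam k s i * w (s + i))\<^sup>2 = Sb k s powr (-2/p) * u (s + i)"
      by (simp add: power_mult_distrib e l2 w2 mult.assoc)
  qed
  also have "\<dots> = Sb k s powr (-2/p) * Sb k s" by (simp add: sum_distrib_left[symmetric] Sb_def)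
  also have "\<dots> = Sb k s powr (-2/p) * Sb k s powr 1" using L_props(4)[of k s] by simp
  also have "\<dots> = Sb k s powr (-2/p + 1)" by (rule powr_add[symmetric])
  also have "-2/p + 1 = 1 - 2/p" by simp
  finally show ?thesis .
qed

lemma sg_abs: "\<bar>sg n\<bar> = 1"
proof -
  have "T (unit_vec n) n \<noteq> 0" using diag[of n] dpos by auto
  then show ?thesis by (simp add: sg_def abs_sgn_eq)
qed

lemma bst_jensen:
  fixes k s :: nat and y :: "nat \<Rightarrow> real" and q :: real
  assumes q: "q \<ge> 1"
  defines "\<theta> \<equiv> \<lambda>i. u (s + i) / Sb k s"
  defines "z \<equiv> \<lambda>i. eps k s i * sg (s + i) * Sb k s powr (1/p) * y (s + i) / u (s + i) powr (1/p)"
  shows "\<bar>bst k s y\<bar> powr q \<le> (\<Sum>i<L k s. \<theta> i * \<bar>z i\<bar> powr q)"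
proof -
  have Sp: "0 < Sb k s" by (rule L_props(4))
  have pt: "eps k s i * mu k s i * y (s + i) = \<theta> i * z i" for i
  proof -
    have up: "0 < u (s + i)" by (rule u_pos)
    have "mu k s i = sg (s + i) * (Sb k s powr (1/p) / Sb k s) * (u (s + i) / u (s + i) powr (1/p))"
      unfolding mu_def using Sp up by (simp add: powr_diff)
    then show ?thesis unfolding \<theta>_def z_def using Sp up by (simp add: field_simps)
  qed
  have "bst k s y = (\<Sum>i<L k s. \<theta> i * z i)" unfolding bst_def using pt by simp
  moreover have "\<bar>\<Sum>i<L k s. \<theta> i * z i\<bar> powr q \<le> (\<Sum>i<L k s. \<theta> i * \<bar>z i\<bar> powr q)"
  proof (rule jensen_powr[OF _ _ q])
    show "{..<L k s} \<noteq> {}" using L_props(2)[of k s] by auto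
    show "\<theta> i \<ge> 0" for i unfolding \<theta>_def using Sp u_pos[of "s+i"] by simp
    show "(\<Sum>i<L k s. \<theta> i) = 1" unfolding \<theta>_def using Sp by (simp add: sum_divide_distrib[symmetric] Sb_def)
  qed simp
  ultimately show ?thesis by simp
qed

lemma absz: "\<bar>eps k s i * sg (s + i) * Sb k s powr (1/p) * y (s + i) / u (s + i) powr (1/p)\<bar>
    = Sb k s powr (1/p) * \<bar>y (s + i)\<bar> / u (s + i) powr (1/p)"
  by (simp add: abs_mult eps_abs sg_abs)

lemma bst_p: "\<bar>bst k s y\<bar> powr p \<le> (\<Sum>i<L k s. \<bar>y (s + i)\<bar> powr p)"
proof -
  have "\<bar>bst k s y\<bar> powr p \<le> (\<Sum>i<L k s. u (s + i) / Sb k s *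
      \<bar>eps k s i * sg (s + i) * Sb k s powr (1/p) * y (s + i) / u (s + i) powr (1/p)\<bar> powr p)"
    by (rule bst_jensen[OF p1(1)])
  also have "\<dots> = (\<Sum>i<L k s. \<bar>y (s + i)\<bar> powr p)"
  proof (rule sum.cong[OF refl])
    fix i
    have Sp: "0 < Sb k s" by (rule L_props(4))
    have up: "0 < u (s + i)" by (rule u_pos)
    have "(Sb k s powr (1/p) * \<bar>y (s + i)\<bar> / u (s + i) powr (1/p)) powr p
       = (Sb k s powr (1/p)) powr p * \<bar>y (s + i)\<bar> powr p / (u (s + i) powr (1/p)) powr p"
      by (simp add: powr_divide powr_mult)
    also have "\<dots> = Sb k s * \<bar>y (s + i)\<bar> powr p / u (s + i)"
      using p1 Sp up by (simp add: powr_powr)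
    finally show "u (s + i) / Sb k s *
      \<bar>eps k s i * sg (s + i) * Sb k s powr (1/p) * y (s + i) / u (s + i) powr (1/p)\<bar> powr p
      = \<bar>y (s + i)\<bar> powr p" unfolding absz using Sp up by simp
  qed
  finally show ?thesis .
qed

lemma bst_2: "(bst k s y)\<^sup>2 \<le> Sb k s powr (2/p - 1) * (\<Sum>i<L k s. (y (s + i) * w (s + i))\<^sup>2)"
proof -
  have "\<bar>bst k s y\<bar> powr 2 \<le> (\<Sum>i<L k s. u (s + i) / Sb k s *
      \<bar>eps k s i * sg (s + i) * Sb k s powr (1/p) * y (s + i) / u (s + i) powr (1/p)\<bar> powr 2)"
    by (rule bst_jensen) simp
  also have "\<dots> = (\<Sum>i<L k s. Sb k s powr (2/p - 1) * (y (s + i) * w (s + i))\<^sup>2)"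
  proof (rule sum.cong[OF refl])
    fix i
    have Sp: "0 < Sb k s" by (rule L_props(4))
    have up: "0 < u (s + i)" by (rule u_pos)
    have a: "(Sb k s powr (1/p) * \<bar>y (s + i)\<bar> / u (s + i) powr (1/p)) powr 2
       = Sb k s powr (2/p) * (y (s + i))\<^sup>2 / u (s + i) powr (2/p)"
    proof -
      have "(Sb k s powr (1/p) * \<bar>y (s + i)\<bar> / u (s + i) powr (1/p)) powr 2
        = (Sb k s powr (1/p)) powr 2 * \<bar>y (s + i)\<bar> powr 2 / (u (s + i) powr (1/p)) powr 2"
        by (simp add: powr_divide powr_mult)
      also have "\<dots> = Sb k s powr (2/p) * (y (s + i))\<^sup>2 / u (s + i) powr (2/p)"
        unfolding powr_powr by simp
      finally show ?thesis .
    qed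
    have b: "u (s + i) / u (s + i) powr (2/p) = (w (s + i))\<^sup>2"
      unfolding w2 using up by (simp add: powr_diff)
    have c: "Sb k s powr (2/p) / Sb k s = Sb k s powr (2/p - 1)"
      using Sp by (simp add: powr_diff)
    show "u (s + i) / Sb k s *
      \<bar>eps k s i * sg (s + i) * Sb k s powr (1/p) * y (s + i) / u (s + i) powr (1/p)\<bar> powr 2
      = Sb k s powr (2/p - 1) * (y (s + i) * w (s + i))\<^sup>2"
    proof -
      have "u (s + i) / Sb k s * (Sb k s powr (2/p) * (y (s + i))\<^sup>2 / u (s + i) powr (2/p))
          = (u (s + i) / u (s + i) powr (2/p)) * (Sb k s powr (2/p) / Sb k s) * (y (s + i))\<^sup>2"
        by (simp add: algebra_simps divide_inverse)
      then show ?thesis unfolding absz a b c by (simp add: power_mult_distrib algebra_simps)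
    qed
  qed
  also have "\<dots> = Sb k s powr (2/p - 1) * (\<Sum>i<L k s. (y (s + i) * w (s + i))\<^sup>2)"
    by (simp add: sum_distrib_left)
  finally show ?thesis by simp
qed

end

context xpw begin

definition "linf f \<longleftrightarrow> (\<forall>x\<in>X. \<forall>y\<in>X. f (\<lambda>k. x k + y k) = f x + f y) \<and> (\<forall>x\<in>X. \<forall>c. f (\<lambda>k. c * x k) = c * f x)"

lemma linf_sum:
  assumes f: "linf f" and "finite J" and v: "\<And>i. i \<in> J \<Longrightarrow> v i \<in> X"
  shows "f (\<lambda>n. \<Sum>i\<in>J. c i * v i n) = (\<Sum>i\<in>J. c i * f (v i))"
  using assms(2) v
proof (induction J rule: finite_induct)
  case empty
  have h: "\<forall>x\<in>X. \<forall>c. f (\<lambda>k. c * x k) = c * f x" using f unfolding linf_def by blast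
  have "f (\<lambda>k. 0 * (\<lambda>n. 0::real) k) = 0 * f (\<lambda>n. 0)" by (rule h[rule_format, OF zero_X])
  then show ?case by simp
next
  case (insert i J)
  have fi: "(\<lambda>k. c i * v i k) \<in> X" using insert scale by auto
  have fJ: "(\<lambda>k. \<Sum>i\<in>J. c i * v i k) \<in> X"
    using X_sum[of J "\<lambda>i k. c i * v i k"] insert scale by auto
  have "f (\<lambda>n. \<Sum>i\<in>insert i J. c i * v i n) = f (\<lambda>n. c i * v i n + (\<Sum>i\<in>J. c i * v i n))"
    using insert by simp
  also have "\<dots> = f (\<lambda>n. c i * v i n) + f (\<lambda>n. \<Sum>i\<in>J. c i * v i n)"
  proof -
    have ha: "\<forall>x\<in>X. \<forall>y\<in>X. f (\<lambda>k. x k + y k) = f x + f y" using f unfolding linf_def by blast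
    show ?thesis by (rule ha[rule_format, OF fi fJ])
  qed
  also have "f (\<lambda>n. c i * v i n) = c i * f (v i)"
  proof -
    have h: "\<forall>x\<in>X. \<forall>c. f (\<lambda>k. c * x k) = c * f x" using f unfolding linf_def by blast
    show ?thesis using insert by (intro h[rule_format]) auto
  qed
  finally show ?case using insert by simp
qed

lemma shrink:
  assumes f: "linf f" and K: "K \<ge> 0" "\<And>x. x \<in> X \<Longrightarrow> \<bar>f x\<bar> \<le> K * N x"
    and v: "\<And>i. v i \<in> X" and d: "\<And>i j n. i \<noteq> j \<Longrightarrow> v i n = 0 \<or> v j n = 0"
    and sp: "\<And>i. Sp (v i) \<le> 1" and s2: "\<And>i. S2 (v i) \<le> D"
  shows "(\<lambda>i. f (v i)) \<longlonglongrightarrow> 0"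
proof (rule ccontr)
  assume "\<not> ?thesis"
  then obtain e where e: "e > 0" "\<And>n0. \<exists>n\<ge>n0. \<not> \<bar>f (v n)\<bar> < e"
    unfolding LIMSEQ_iff by auto
  define I where "I = {n. e \<le> \<bar>f (v n)\<bar>}"
  have "\<forall>m. \<exists>n\<ge>m. n \<in> I" using e(2) by (force simp: I_def not_less)
  then have "infinite I" unfolding infinite_nat_iff_unbounded_le .
  define M where "M = max 1 (sqrt D)"
  have M1: "M \<ge> 1" by (simp add: M_def)
  obtain m :: nat where m: "(K * M / e)\<^sup>2 < real m" using reals_Archimedean2 by blast
  have m1: "real m \<ge> 1"
  proof (rule ccontr)
    assume "\<not> real m \<ge> 1" then have "m = 0" by simp
    then show False using m by (simp add: not_less)
  qed
  obtain J where J: "finite J" "card J = m" "J \<subseteq> I" using infinite_arbitrarily_large[OF \<open>infinite I\<close>] by blast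
  define c where "c i = sgn (f (v i))" for i
  define x where "x = (\<lambda>n. \<Sum>i\<in>J. c i * v i n)"
  have cv: "(\<lambda>n. c i * v i n) \<in> X" for i by (rule scale(1)[OF v])
  have xX: "x \<in> X" unfolding x_def using X_sum[OF J(1), of "\<lambda>i n. c i * v i n"] cv by blast
  have fx: "f x = (\<Sum>i\<in>J. \<bar>f (v i)\<bar>)" unfolding x_def
    by (subst linf_sum[OF f J(1) v]) (auto simp: c_def sgn_if intro!: sum.cong)
  have "real m * e \<le> f x"
  proof -
    have "(\<Sum>i\<in>J. e) \<le> (\<Sum>i\<in>J. \<bar>f (v i)\<bar>)" using J(3) by (intro sum_mono) (auto simp: I_def)
    then show ?thesis using J(2) fx by simp
  qed
  have dd: "c i * v i n = 0 \<or> c j * v j n = 0" if "i \<noteq> j" for i j n using d[OF that, of n] by auto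
  have spx: "Sp x \<le> real m"
  proof -
    have "Sp x = (\<Sum>i\<in>J. Sp (\<lambda>n. c i * v i n))" unfolding x_def by (rule disj_sum(1)[OF J(1) cv dd])
    also have "\<dots> \<le> (\<Sum>i\<in>J. 1)"
    proof (rule sum_mono)
      fix i
      have "Sp (\<lambda>n. c i * v i n) \<le> Sp (v i)" by (rule dominated(2)[OF v]) (simp add: c_def abs_mult sgn_if)
      then show "Sp (\<lambda>n. c i * v i n) \<le> 1" using sp[of i] by simp
    qed
    finally show ?thesis using J(2) by simp
  qed
  have s2x: "S2 x \<le> real m * D"
  proof -
    have "S2 x = (\<Sum>i\<in>J. S2 (\<lambda>n. c i * v i n))" unfolding x_def by (rule disj_sum(2)[OF J(1) cv dd])
    also have "\<dots> \<le> (\<Sum>i\<in>J. D)"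
    proof (rule sum_mono)
      fix i
      have "S2 (\<lambda>n. c i * v i n) \<le> S2 (v i)" by (rule dominated(3)[OF v]) (simp add: c_def abs_mult sgn_if)
      then show "S2 (\<lambda>n. c i * v i n) \<le> D" using s2[of i] by simp
    qed
    finally show ?thesis using J(2) by simp
  qed
  define C where "C = sqrt (real m) * M"
  have sm1: "sqrt (real m) \<ge> 1" using m1 by simp
  have C1: "C \<ge> sqrt (real m)" unfolding C_def using M1 sm1 by (simp add: mult_le_cancel_left1)
  have NC: "N x \<le> C"
  proof (rule N_leI[OF xX])
    show "0 \<le> C" using M1 by (simp add: C_def)
    have "real m = sqrt (real m) powr 2" using m1 by simp
    also have "\<dots> \<le> sqrt (real m) powr p" using sm1 p2 by (intro powr_mono) auto
    also have "\<dots> \<le> C powr p" using C1 sm1 p1 by (intro powr_mono2) auto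
    finally show "Sp x \<le> C powr p" using spx by simp
    have "D \<le> M\<^sup>2"
    proof (cases "D \<le> 0")
      case True
      have "0 \<le> M\<^sup>2" by simp
      with True show ?thesis by linarith
    next
      case False
      then have "D = (sqrt D)\<^sup>2" by simp
      also have "\<dots> \<le> M\<^sup>2" unfolding M_def using False by (intro power_mono) auto
      finally show ?thesis .
    qed
    then have "real m * D \<le> real m * M\<^sup>2" by (intro mult_left_mono) auto
    also have "\<dots> = C\<^sup>2" by (simp add: C_def power_mult_distrib)
    finally show "S2 x \<le> C\<^sup>2" using s2x by simp
  qed
  have fxK: "f x \<le> K * N x" using K(2)[OF xX] by simp
  have "K * N x \<le> K * C" by (rule mult_left_mono[OF NC K(1)])
  then have "real m * e \<le> K * C" using \<open>real m * e \<le> f x\<close> fxK by linarith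
  moreover have "real m = sqrt (real m) * sqrt (real m)" using m1 by simp
  ultimately have "(sqrt (real m) * e) * sqrt (real m) \<le> (K * M) * sqrt (real m)"
    by (simp add: C_def algebra_simps)
  then have "sqrt (real m) * e \<le> K * M" using sm1 mult_le_cancel_right_pos[of "sqrt (real m)"] by (simp add: mult.commute)
  then have "sqrt (real m) \<le> K * M / e" using e(1) by (simp add: field_simps)
  then have "(sqrt (real m))\<^sup>2 \<le> (K * M / e)\<^sup>2" by (intro power_mono) auto
  then show False using m m1 by simp
qed

end

lemma shift_sum_le:
  fixes g :: "nat \<Rightarrow> real"
  assumes g: "summable g" "\<And>n. 0 \<le> g n"
  shows "(\<Sum>i<l. g (s + i)) \<le> (\<Sum>n. if n < s then 0 else g n)"
    "(\<Sum>n. if n < s then 0 else g n) \<le> suminf g"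
proof -
  have st: "summable (\<lambda>n. if n < s then 0 else g n)"
    by (rule summable_comparison_test[OF _ g(1)]) (use g(2) in auto)
  have "(\<Sum>i<l. g (s + i)) = (\<Sum>n\<in>{s..<s+l}. if n < s then 0 else g n)"
  proof -
    have "(\<Sum>n\<in>{s..<s+l}. if n < s then 0 else g n) = (\<Sum>n\<in>{s..<s+l}. g n)" by (rule sum.cong) auto
    also have "\<dots> = (\<Sum>i\<in>{0..<l}. g (i + s))" using sum.shift_bounds_nat_ivl[of g 0 s l] by (simp add: add.commute)
    finally show ?thesis by (simp add: atLeast0LessThan add.commute)
  qed
  also have "\<dots> \<le> (\<Sum>n. if n < s then 0 else g n)" by (rule sum_le_suminf[OF st]) (use g(2) in auto)
  finally show "(\<Sum>i<l. g (s + i)) \<le> (\<Sum>n. if n < s then 0 else g n)" .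
  show "(\<Sum>n. if n < s then 0 else g n) \<le> suminf g" by (rule suminf_le[OF _ st g(1)]) (use g(2) in auto)
qed

context fact begin

lemma bst_add: "bst k s (\<lambda>n. x n + y n) = bst k s x + bst k s y"
  by (simp add: bst_def algebra_simps sum.distrib)

lemma bst_scale: "bst k s (\<lambda>n. c * x n) = c * bst k s x"
  by (simp add: bst_def sum_distrib_left algebra_simps)

lemma bst_tail: assumes y: "y \<in> X"
  shows "\<bar>bst k s y\<bar> powr p \<le> (\<Sum>n. if n < s then 0 else \<bar>y n\<bar> powr p)"
  using bst_p[of k s y] shift_sum_le(1)[OF XD(1)[OF y], where l="L k s" and s=s] by simp

lemma bst_le_N: assumes y: "y \<in> X" shows "\<bar>bst k s y\<bar> \<le> N y"
proof -
  have "\<bar>bst k s y\<bar> powr p \<le> Sp y"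
    using bst_tail[OF y, of k s] shift_sum_le(2)[OF XD(1)[OF y], of s] unfolding Sp_def by simp
  then have "(\<bar>bst k s y\<bar> powr p) powr (1/p) \<le> Sp y powr (1/p)" using p1 by (intro powr_mono2) auto
  then have "\<bar>bst k s y\<bar> \<le> Sp y powr (1/p)" using p1 by (simp add: powr_powr)
  then show ?thesis unfolding N_eq by simp
qed

lemma bst_ev: assumes y: "y \<in> X" and e: "0 < e"
  shows "eventually (\<lambda>s. \<bar>bst k s y\<bar> \<le> e) sequentially"
proof -
  have "eventually (\<lambda>s. (\<Sum>n. if n < s then 0 else \<bar>y n\<bar> powr p) < e powr p) sequentially"
    using order_tendstoD(2)[OF tail_to_0[OF XD(1)[OF y]], of "e powr p"] e by simp
  then show ?thesis
  proof (rule eventually_mono)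
    fix s assume a: "(\<Sum>n. if n < s then 0 else \<bar>y n\<bar> powr p) < e powr p"
    show "\<bar>bst k s y\<bar> \<le> e"
    proof (rule ccontr)
      assume "\<not> \<bar>bst k s y\<bar> \<le> e"
      then have "e powr p \<le> \<bar>bst k s y\<bar> powr p" using e p1 by (intro powr_mono2) auto
      then show False using a bst_tail[OF y, of k s] by simp
    qed
  qed
qed

lemma bv_supp: "bv k s n \<noteq> 0 \<Longrightarrow> s \<le> n \<and> n < s + L k s"
  by (simp add: bv_pt split: if_splits)

lemma bv_S2_le:
  assumes "\<And>n. n \<ge> s \<Longrightarrow> w n \<le> w k"
  shows "S2 (bv k s) \<le> (2 * u k) powr (1 - 2/p)"
proof -
  have "u (s + L k s - 1) \<le> u k"
  proof -
    have "s + L k s - 1 \<ge> s" using L_props(2)[of k s] by simp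
    then have "w (s + L k s - 1) \<le> w k" using assms by blast
    then show ?thesis unfolding u_def using wpos r_pos by (intro powr_mono2) (auto intro: less_imp_le)
  qed
  then have "Sb k s \<le> 2 * u k" using L_props(3)[of k s] by simp
  then have "Sb k s powr (1 - 2/p) \<le> (2 * u k) powr (1 - 2/p)"
    using L_props(4)[of k s] p2 by (intro powr_mono2) auto
  then show ?thesis by (simp add: bv_S2)
qed

definition "gq k = ((1::real)/2)^k"

lemma gq_X: "gq \<in> X"
proof -
  obtain W where W: "\<And>n. norm (w n) \<le> W" using convergent_imp_Bseq[OF convergentI[OF wlim]] by (auto elim!: BseqE) blast
  have h: "((1::real)/2)^k \<le> 1" for k by (simp add: power_le_one)
  have a: "\<bar>gq k\<bar> powr p \<le> (1/2)^k" for k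
    unfolding gq_def using powr_le_one_le[of "(1/2)^k" p] p1 h[of k] by simp
  have b: "(gq k * w k)\<^sup>2 \<le> W\<^sup>2 * (1/2)^k" for k
  proof -
    have "(gq k * w k)\<^sup>2 = ((1/2)^k)^2 * (w k)\<^sup>2" by (simp add: gq_def power_mult_distrib)
    also have "\<dots> \<le> (1/2)^k * W\<^sup>2"
    proof (rule mult_mono)
      show "(((1::real)/2)^k)\<^sup>2 \<le> (1/2)^k" using h[of k] by (simp add: power2_eq_square mult_left_le_one_le)
      show "(w k)\<^sup>2 \<le> W\<^sup>2" using W[of k] wpos[of k] by (intro power_mono) auto
    qed auto
    finally show ?thesis by (simp add: mult.commute)
  qed
  have "summable (\<lambda>k. \<bar>gq k\<bar> powr p)"
    by (rule summable_comparison_test[OF _ summable_geometric[of "1/2"]]) (use a in auto)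
  moreover have "summable (\<lambda>k. (gq k * w k)\<^sup>2)"
    by (rule summable_comparison_test[OF _ summable_mult[OF summable_geometric[of "1/2"]]]) (use b in auto)
  ultimately show ?thesis by (simp add: X_iff)
qed

definition "rho = 1 / (4 * (N gq + 1))"
definition "eta k j = \<delta> * rho * (1/2)^(k + j)"

lemma rho_pos: "0 < rho" using N_nonneg[of gq] by (simp add: rho_def)
lemma eta_pos: "0 < eta k j" using rho_pos dpos by (simp add: eta_def)

definition "good k prev s \<longleftrightarrow> (\<forall>j<k. prev j + L j (prev j) \<le> s) \<and> (\<forall>n\<ge>s. w n \<le> w k)
   \<and> (\<forall>j<k. \<bar>bst k s (T (bv j (prev j)))\<bar> \<le> eta k j)
   \<and> (\<forall>j<k. \<bar>bst j (prev j) (T (bv k s))\<bar> \<le> eta k j)"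

lemma good_cong: "(\<And>j. j < k \<Longrightarrow> prev j = prev' j) \<Longrightarrow> good k prev s = good k prev' s"
  unfolding good_def by auto

lemma good_ex: "\<exists>s. good k prev s"
proof -
  obtain K where K: "K \<ge> 0" "\<And>x. x \<in> X \<Longrightarrow> N (T x) \<le> K * N x" using bop_bound[OF Tb] by blast
  have E1: "eventually (\<lambda>s. \<forall>j\<in>{..<k}. prev j + L j (prev j) \<le> s) sequentially"
    by (rule eventually_ball_finite) (auto intro: eventually_ge_at_top)
  have E2: "eventually (\<lambda>s. \<forall>n\<ge>s. w n \<le> w k) sequentially"
  proof -
    have "eventually (\<lambda>n. w n < w k) sequentially" by (rule order_tendstoD(2)[OF wlim wpos])
    then obtain N0 where N0: "\<And>n. n \<ge> N0 \<Longrightarrow> w n < w k" by (auto simp: eventually_sequentially)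
    show ?thesis unfolding eventually_sequentially using N0 by (intro exI[of _ N0]) (auto intro: less_imp_le)
  qed
  have E3: "eventually (\<lambda>s. \<forall>j\<in>{..<k}. \<bar>bst k s (T (bv j (prev j)))\<bar> \<le> eta k j) sequentially"
    by (rule eventually_ball_finite) (auto intro!: bst_ev eta_pos bopD(1)[OF Tb] bv_X)
  obtain M0 where M0: "\<And>s. s \<ge> M0 \<Longrightarrow> (\<forall>j\<in>{..<k}. prev j + L j (prev j) \<le> s) \<and> (\<forall>n\<ge>s. w n \<le> w k)
      \<and> (\<forall>j\<in>{..<k}. \<bar>bst k s (T (bv j (prev j)))\<bar> \<le> eta k j)"
    using eventually_conj[OF E1 eventually_conj[OF E2 E3]] by (auto simp: eventually_sequentially)
  define \<sigma> where "\<sigma> = rec_nat M0 (\<lambda>_ s. s + L k s)"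
  have \<sigma>S: "\<sigma> (Suc i) = \<sigma> i + L k (\<sigma> i)" for i by (simp add: \<sigma>_def)
  have \<sigma>0: "\<sigma> 0 = M0" by (simp add: \<sigma>_def)
  have \<sigma>M: "\<sigma> i \<ge> M0" for i by (induction i) (auto simp: \<sigma>0 \<sigma>S)
  have \<sigma>mono: "i < j \<Longrightarrow> \<sigma> (Suc i) \<le> \<sigma> j" for i j
  proof (induction j)
    case 0 then show ?case by simp
  next
    case (Suc j) then show ?case by (cases "i = j") (auto simp: \<sigma>S less_Suc_eq)
  qed
  define v where "v i = bv k (\<sigma> i)" for i
  have vX: "v i \<in> X" for i unfolding v_def by (rule bv_X)
  have vd: "v i n = 0 \<or> v j n = 0" if "i \<noteq> j" for i j n
  proof (rule ccontr)
    assume "\<not> ?thesis"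
    then have a: "\<sigma> i \<le> n \<and> n < \<sigma> i + L k (\<sigma> i)" "\<sigma> j \<le> n \<and> n < \<sigma> j + L k (\<sigma> j)"
      using bv_supp unfolding v_def by blast+
    show False
    proof (cases "i < j")
      case True then show False using \<sigma>mono[OF True] a \<sigma>S[of i] by simp
    next
      case False then have "j < i" using that by simp
      then show False using \<sigma>mono[of j i] a \<sigma>S[of j] by simp
    qed
  qed
  have vsp: "Sp (v i) \<le> 1" for i unfolding v_def by (simp add: bv_Sp)
  have vs2: "S2 (v i) \<le> (2 * u k) powr (1 - 2/p)" for i
    unfolding v_def by (rule bv_S2_le) (use M0[OF \<sigma>M[of i]] in auto)
  have E4: "eventually (\<lambda>i. \<forall>j\<in>{..<k}. \<bar>bst j (prev j) (T (v i))\<bar> \<le> eta k j) sequentially"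
  proof (rule eventually_ball_finite[OF finite_lessThan], rule ballI)
    fix j assume "j \<in> {..<k}"
    define f where "f x = bst j (prev j) (T x)" for x
    have lf: "linf f" unfolding linf_def f_def
      using bopD(2)[OF Tb] bopD(3)[OF Tb] by (simp add: bst_add bst_scale)
    have fK: "\<bar>f x\<bar> \<le> K * N x" if "x \<in> X" for x
      unfolding f_def using bst_le_N[OF bopD(1)[OF Tb that], of j "prev j"] K(2)[OF that] by linarith
    have "(\<lambda>i. f (v i)) \<longlonglongrightarrow> 0" by (rule shrink[OF lf K(1) fK vX vd vsp vs2])
    from order_tendstoD(2)[OF tendsto_rabs[OF this], of "eta k j"] eta_pos
    show "eventually (\<lambda>i. \<bar>bst j (prev j) (T (v i))\<bar> \<le> eta k j) sequentially"
      unfolding f_def by (auto elim: eventually_mono)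
  qed
  then obtain i where i: "\<forall>j\<in>{..<k}. \<bar>bst j (prev j) (T (v i))\<bar> \<le> eta k j"
    by (auto simp: eventually_sequentially)
  have "good k prev (\<sigma> i)" unfolding good_def using M0[OF \<sigma>M[of i]] i unfolding v_def by auto
  then show ?thesis by blast
qed

end

context fact begin

primrec stl :: "nat \<Rightarrow> nat list" where
  "stl 0 = [SOME s. good 0 (\<lambda>_. 0) s]"
| "stl (Suc k) = stl k @ [SOME s. good (Suc k) (\<lambda>j. stl k ! j) s]"

definition "st k = stl k ! k"

lemma stl_len: "length (stl k) = Suc k" by (induction k) auto

lemma stl_nth: "j \<le> k \<Longrightarrow> stl k ! j = st j"
proof (induction k)
  case 0 then show ?case by (simp add: st_def)
next
  case (Suc k)
  show ?case
  proof (cases "j = Suc k")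
    case True then show ?thesis by (simp add: st_def)
  next
    case False
    then have "j \<le> k" using Suc by simp
    then show ?thesis using Suc stl_len[of k] by (simp add: nth_append)
  qed
qed

lemma st_good: "good k st (st k)"
proof (cases k)
  case 0
  have "good 0 (\<lambda>_. 0) (SOME s. good 0 (\<lambda>_. 0) s)" by (rule someI_ex[OF good_ex])
  then show ?thesis using 0 good_cong[of 0 "\<lambda>_. 0" st] by (simp add: st_def)
next
  case (Suc m)
  have "good (Suc m) (\<lambda>j. stl m ! j) (SOME s. good (Suc m) (\<lambda>j. stl m ! j) s)" by (rule someI_ex[OF good_ex])
  moreover have "good (Suc m) (\<lambda>j. stl m ! j) s = good (Suc m) st s" for s
    by (rule good_cong) (simp add: stl_nth)
  moreover have "st (Suc m) = (SOME s. good (Suc m) (\<lambda>j. stl m ! j) s)"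
    unfolding st_def using stl_len[of m] by (simp add: nth_append)
  ultimately show ?thesis using Suc by simp
qed

lemma P1: "j < k \<Longrightarrow> st j + L j (st j) \<le> st k" using st_good[of k] unfolding good_def by blast
lemma P2: "n \<ge> st k \<Longrightarrow> w n \<le> w k" using st_good[of k] unfolding good_def by blast
lemma P3: "j < k \<Longrightarrow> \<bar>bst k (st k) (T (bv j (st j)))\<bar> \<le> eta k j" using st_good[of k] unfolding good_def by blast
lemma P4: "j < k \<Longrightarrow> \<bar>bst j (st j) (T (bv k (st k)))\<bar> \<le> eta k j" using st_good[of k] unfolding good_def by blast

lemma st_mono: "st j < st (Suc j)" using P1[of j "Suc j"] L_props(2)[of j "st j"] by simp

lemma st_ge: "k \<le> st k"
proof (induction k)
  case (Suc k) then show ?case using st_mono[of k] by simp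
qed simp

abbreviation "b k \<equiv> bv k (st k)"
abbreviation "c k \<equiv> cc k (st k)"

lemma b_supp: "b k n \<noteq> 0 \<Longrightarrow> st k \<le> n \<and> n < st k + L k (st k)"
  by (rule bv_supp)

lemma b_disj: "j \<noteq> k \<Longrightarrow> b j n = 0 \<or> b k n = 0"
proof (rule ccontr)
  assume jk: "j \<noteq> k" and "\<not> (b j n = 0 \<or> b k n = 0)"
  then have a: "st j \<le> n \<and> n < st j + L j (st j)" "st k \<le> n \<and> n < st k + L k (st k)"
    using b_supp by blast+
  show False
  proof (cases "j < k")
    case True then show False using P1[OF True] a by simp
  next
    case False then have "k < j" using jk by simp
    then show False using P1[of k j] a by simp
  qed
qed

lemma b_zero_lt: "n < k \<Longrightarrow> b k n = 0"
  using b_supp[of k n] st_ge[of k] by fastforce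

lemma blocks_le:
  fixes g :: "nat \<Rightarrow> real"
  assumes g: "summable g" "\<And>n. 0 \<le> g n"
  shows "(\<Sum>k<M. \<Sum>i<L k (st k). g (st k + i)) \<le> suminf g"
proof -
  define I where "I k = {st k..<st k + L k (st k)}" for k
  have e: "(\<Sum>i<L k (st k). g (st k + i)) = (\<Sum>n\<in>I k. g n)" for k
  proof -
    have "(\<Sum>n\<in>I k. g n) = (\<Sum>i\<in>{0..<L k (st k)}. g (i + st k))"
      unfolding I_def using sum.shift_bounds_nat_ivl[of g 0 "st k" "L k (st k)"] by (simp add: add.commute)
    then show ?thesis by (simp add: atLeast0LessThan add.commute)
  qed
  have disj: "I j \<inter> I k = {}" if "j \<noteq> k" for j k
  proof (cases "j < k")
    case True then show ?thesis using P1[OF True] by (auto simp: I_def)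
  next
    case False then have "k < j" using that by simp
    then show ?thesis using P1[of k j] by (auto simp: I_def)
  qed
  have "(\<Sum>k<M. \<Sum>i<L k (st k). g (st k + i)) = (\<Sum>k<M. \<Sum>n\<in>I k. g n)" by (simp add: e)
  also have "\<dots> = (\<Sum>n\<in>(\<Union>k<M. I k). g n)"
    apply (rule sum.UNION_disjoint[symmetric])
      apply simp
     apply (simp add: I_def)
    using disj by blast
  also have "\<dots> \<le> suminf g" by (rule sum_le_suminf[OF g(1)]) (auto simp: I_def g(2))
  finally show ?thesis .
qed

lemma Sp_scale: "x \<in> X \<Longrightarrow> Sp (\<lambda>n. a * x n) = \<bar>a\<bar> powr p * Sp x"
  unfolding Sp_def by (simp add: abs_mult powr_mult suminf_mult[OF XD(1)])

lemma S2_scale: "x \<in> X \<Longrightarrow> S2 (\<lambda>n. a * x n) = a\<^sup>2 * S2 x"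
proof -
  assume x: "x \<in> X"
  have "(\<lambda>n. (a * x n * w n)\<^sup>2) = (\<lambda>n. a\<^sup>2 * (x n * w n)\<^sup>2)" by (simp add: power_mult_distrib mult.assoc)
  then show ?thesis unfolding S2_def using suminf_mult[OF XD(2)[OF x]] by simp
qed

definition "Bop x = (\<lambda>n. \<Sum>k\<le>n. x k * b k n)"

lemma Bop_trunc: "Bop (\<lambda>k. if k < M then x k else 0) = (\<lambda>n. \<Sum>k<M. x k * b k n)"
proof
  fix n
  define f where "f k = (if k < M then x k else 0) * b k n" for k
  have "(\<Sum>k<Suc n. f k) = (\<Sum>k<max M (Suc n). f k)"
    by (rule sum.mono_neutral_left) (auto simp: f_def b_zero_lt)
  moreover have "(\<Sum>k<M. x k * b k n) = (\<Sum>k<max M (Suc n). f k)"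
  proof -
    have "(\<Sum>k<M. x k * b k n) = (\<Sum>k<M. f k)" by (rule sum.cong) (auto simp: f_def)
    also have "\<dots> = (\<Sum>k<max M (Suc n). f k)" by (rule sum.mono_neutral_left) (auto simp: f_def)
    finally show ?thesis .
  qed
  ultimately show "Bop (\<lambda>k. if k < M then x k else 0) n = (\<Sum>k<M. x k * b k n)"
    unfolding Bop_def f_def by (simp add: lessThan_Suc_atMost)
qed

lemma Bop_unit: "Bop (unit_vec j) = b j"
proof
  fix n
  show "Bop (unit_vec j) n = b j n"
  proof (cases "j \<le> n")
    case True
    have "(\<lambda>k. unit_vec j k * b k n) = (\<lambda>k. if k = j then b k n else 0)" by (auto simp: unit_vec_def)
    have "Bop (unit_vec j) n = (\<Sum>k\<le>n. if k = j then b k n else 0)"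
      unfolding Bop_def by (intro sum.cong) (auto simp: unit_vec_def)
    then show ?thesis using True by simp
  next
    case False then show ?thesis by (simp add: Bop_def unit_vec_def b_zero_lt)
  qed
qed

lemma b_S2: "S2 (b k) \<le> 2 * (w k)\<^sup>2"
proof -
  have "S2 (b k) \<le> (2 * u k) powr (1 - 2/p)" by (rule bv_S2_le) (rule P2)
  also have "\<dots> = 2 powr (1 - 2/p) * (w k)\<^sup>2" using u_pos[of k] by (simp add: powr_mult w2)
  also have "\<dots> \<le> 2 * (w k)\<^sup>2"
  proof -
    have "2 powr (1 - 2/p) \<le> 2 powr 1" using p2 by (intro powr_mono) auto
    then show ?thesis by (intro mult_right_mono) auto
  qed
  finally show ?thesis .
qed

lemma Bsum_norm:
  assumes x: "x \<in> X"
  shows "(\<lambda>n. \<Sum>k<M. x k * b k n) \<in> X" "N (\<lambda>n. \<Sum>k<M. x k * b k n) \<le> sqrt 2 * N x"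
proof -
  have fX: "(\<lambda>n. x k * b k n) \<in> X" for k by (rule scale(1)[OF bv_X])
  show X1: "(\<lambda>n. \<Sum>k<M. x k * b k n) \<in> X" using X_sum[of "{..<M}" "\<lambda>k n. x k * b k n"] fX by blast
  have d: "x i * b i n = 0 \<or> x j * b j n = 0" if "i \<noteq> j" for i j n using b_disj[OF that, of n] by auto
  have sp: "Sp (\<lambda>n. \<Sum>k<M. x k * b k n) \<le> Sp x"
  proof -
    have "Sp (\<lambda>n. \<Sum>k<M. x k * b k n) = (\<Sum>k<M. Sp (\<lambda>n. x k * b k n))"
      by (rule disj_sum(1)) (use fX d in auto)
    also have "\<dots> = (\<Sum>k<M. \<bar>x k\<bar> powr p)" by (simp add: Sp_scale[OF bv_X] bv_Sp)
    also have "\<dots> \<le> Sp x" unfolding Sp_def by (rule sum_le_suminf[OF XD(1)[OF x]]) auto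
    finally show ?thesis .
  qed
  have s2: "S2 (\<lambda>n. \<Sum>k<M. x k * b k n) \<le> 2 * S2 x"
  proof -
    have "S2 (\<lambda>n. \<Sum>k<M. x k * b k n) = (\<Sum>k<M. S2 (\<lambda>n. x k * b k n))"
      by (rule disj_sum(2)) (use fX d in auto)
    also have "\<dots> = (\<Sum>k<M. (x k)\<^sup>2 * S2 (b k))" by (simp add: S2_scale[OF bv_X])
    also have "\<dots> \<le> (\<Sum>k<M. 2 * (x k * w k)\<^sup>2)"
    proof (rule sum_mono)
      fix k
      have "(x k)\<^sup>2 * S2 (b k) \<le> (x k)\<^sup>2 * (2 * (w k)\<^sup>2)" by (intro mult_left_mono b_S2) auto
      then show "(x k)\<^sup>2 * S2 (b k) \<le> 2 * (x k * w k)\<^sup>2" by (simp add: power_mult_distrib)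
    qed
    also have "\<dots> = 2 * (\<Sum>k<M. (x k * w k)\<^sup>2)" by (simp add: sum_distrib_left)
    also have "\<dots> \<le> 2 * S2 x" unfolding S2_def
      by (intro mult_left_mono sum_le_suminf[OF XD(2)[OF x]]) auto
    finally show ?thesis .
  qed
  show "N (\<lambda>n. \<Sum>k<M. x k * b k n) \<le> sqrt 2 * N x"
  proof (rule N_leI[OF X1])
    have Nx: "N x \<le> sqrt 2 * N x" using N_nonneg[of x] by (simp add: mult_le_cancel_right1)
    show "0 \<le> sqrt 2 * N x" using N_nonneg[of x] by simp
    have "Sp x \<le> N x powr p" by (rule Sp_le_N[OF x])
    also have "\<dots> \<le> (sqrt 2 * N x) powr p" using Nx N_nonneg p1 by (intro powr_mono2) auto
    finally show "Sp (\<lambda>n. \<Sum>k<M. x k * b k n) \<le> (sqrt 2 * N x) powr p" using sp by simp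
    have "2 * S2 x \<le> 2 * (N x)\<^sup>2" using S2_le_N[OF x] by simp
    also have "\<dots> = (sqrt 2 * N x)\<^sup>2" by (simp add: power_mult_distrib)
    finally show "S2 (\<lambda>n. \<Sum>k<M. x k * b k n) \<le> (sqrt 2 * N x)\<^sup>2" using s2 by simp
  qed
qed

lemma Bop_bop: "bop Bop"
proof (rule bopI[where K="sqrt 2"])
  fix x assume x: "x \<in> X"
  define xs where "xs M = (\<lambda>n. \<Sum>k<M. x k * b k n)" for M
  have lim: "(\<lambda>M. xs M n) \<longlonglongrightarrow> Bop x n" for n
  proof (rule tendsto_eventually)
    have "xs M n = Bop x n" if "M \<ge> Suc n" for M
    proof -
      have "xs M n = Bop (\<lambda>k. if k < M then x k else 0) n" unfolding xs_def Bop_trunc ..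
      also have "\<dots> = Bop x n" unfolding Bop_def using that by (intro sum.cong) auto
      finally show ?thesis .
    qed
    then show "eventually (\<lambda>M. xs M n = Bop x n) sequentially"
      unfolding eventually_sequentially by blast
  qed
  have "Bop x \<in> X \<and> N (Bop x) \<le> sqrt 2 * N x"
    using fatou[of xs "sqrt 2 * N x" "Bop x", OF _ _ lim] Bsum_norm[OF x] unfolding xs_def by blast
  then show "Bop x \<in> X" "N (Bop x) \<le> sqrt 2 * N x" by auto
next
  fix x y :: "nat \<Rightarrow> real"
  show "Bop (\<lambda>k. x k + y k) = (\<lambda>k. Bop x k + Bop y k)" by (simp add: Bop_def algebra_simps sum.distrib)
next
  fix x :: "nat \<Rightarrow> real" and a
  show "Bop (\<lambda>k. a * x k) = (\<lambda>k. a * Bop x k)" by (simp add: Bop_def sum_distrib_left algebra_simps)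
qed

definition "Vop y = (\<lambda>k. bst k (st k) y / c k)"

lemma c_pos: "0 < c k" using cc_ge[of k "st k"] dpos by simp

lemma wSb: "(w k)\<^sup>2 * Sb k s powr (2/p - 1) \<le> 1"
proof -
  have Sp: "0 < Sb k s" by (rule L_props(4))
  have "u k powr (1 - 2/p) \<le> Sb k s powr (1 - 2/p)"
    using L_props(1)[of k s] u_pos[of k] p2 by (intro powr_mono2) auto
  moreover have "Sb k s powr (2/p - 1) = 1 / Sb k s powr (1 - 2/p)"
    using Sp by (simp add: powr_minus_divide[symmetric])
  ultimately show ?thesis unfolding w2 using Sp by (simp add: divide_le_eq_1)
qed

lemma Vop_bop: "bop Vop"
proof (rule bopI[where K="1/\<delta>"])
  fix y assume y: "y \<in> X"
  have A: "(\<Sum>k<M. \<bar>Vop y k\<bar> powr p) \<le> Sp y / \<delta> powr p" for M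
  proof -
    have "\<bar>Vop y k\<bar> powr p \<le> (\<Sum>i<L k (st k). \<bar>y (st k + i)\<bar> powr p) / \<delta> powr p" for k
    proof -
      have "\<bar>Vop y k\<bar> powr p = \<bar>bst k (st k) y\<bar> powr p / c k powr p"
        unfolding Vop_def using c_pos[of k] by (simp add: powr_divide)
      also have "\<dots> \<le> \<bar>bst k (st k) y\<bar> powr p / \<delta> powr p"
        using c_pos[of k] cc_ge[of k "st k"] dpos p1 by (intro divide_left_mono powr_mono2) auto
      also have "\<dots> \<le> (\<Sum>i<L k (st k). \<bar>y (st k + i)\<bar> powr p) / \<delta> powr p"
        using dpos by (intro divide_right_mono bst_p) auto
      finally show ?thesis .
    qed
    then have "(\<Sum>k<M. \<bar>Vop y k\<bar> powr p) \<le> (\<Sum>k<M. (\<Sum>i<L k (st k). \<bar>y (st k + i)\<bar> powr p) / \<delta> powr p)"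
      by (rule sum_mono)
    also have "\<dots> = (\<Sum>k<M. \<Sum>i<L k (st k). \<bar>y (st k + i)\<bar> powr p) / \<delta> powr p"
      by (simp add: sum_divide_distrib)
    also have "\<dots> \<le> Sp y / \<delta> powr p" unfolding Sp_def
      using dpos by (intro divide_right_mono blocks_le XD(1)[OF y]) auto
    finally show ?thesis .
  qed
  have B: "(\<Sum>k<M. (Vop y k * w k)\<^sup>2) \<le> S2 y / \<delta>\<^sup>2" for M
  proof -
    have "(Vop y k * w k)\<^sup>2 \<le> (\<Sum>i<L k (st k). (y (st k + i) * w (st k + i))\<^sup>2) / \<delta>\<^sup>2" for k
    proof -
      define Q where "Q = (\<Sum>i<L k (st k). (y (st k + i) * w (st k + i))\<^sup>2)"
      have Q0: "0 \<le> Q" unfolding Q_def by (rule sum_nonneg) simp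
      have "(Vop y k * w k)\<^sup>2 = (bst k (st k) y)\<^sup>2 * (w k)\<^sup>2 / (c k)\<^sup>2"
        unfolding Vop_def by (simp add: power_mult_distrib power_divide)
      also have "\<dots> \<le> (Sb k (st k) powr (2/p - 1) * Q) * (w k)\<^sup>2 / (c k)\<^sup>2"
        unfolding Q_def by (intro divide_right_mono mult_right_mono bst_2) auto
      also have "\<dots> = ((w k)\<^sup>2 * Sb k (st k) powr (2/p - 1)) * Q / (c k)\<^sup>2" by (simp add: algebra_simps)
      also have "\<dots> \<le> 1 * Q / (c k)\<^sup>2" using Q0 by (intro divide_right_mono mult_right_mono wSb) auto
      also have "\<dots> \<le> Q / \<delta>\<^sup>2"
      proof -
        have dc: "\<delta>\<^sup>2 \<le> (c k)\<^sup>2" using dpos cc_ge[of k "st k"] by (intro power_mono) auto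
        have "0 < (c k)\<^sup>2 * \<delta>\<^sup>2" using dpos c_pos[of k] by simp
        then show ?thesis using divide_left_mono[OF dc Q0] by simp
      qed
      finally show ?thesis unfolding Q_def .
    qed
    then have "(\<Sum>k<M. (Vop y k * w k)\<^sup>2) \<le> (\<Sum>k<M. (\<Sum>i<L k (st k). (y (st k + i) * w (st k + i))\<^sup>2) / \<delta>\<^sup>2)"
      by (rule sum_mono)
    also have "\<dots> = (\<Sum>k<M. \<Sum>i<L k (st k). (y (st k + i) * w (st k + i))\<^sup>2) / \<delta>\<^sup>2"
      by (simp add: sum_divide_distrib)
    also have "\<dots> \<le> S2 y / \<delta>\<^sup>2" unfolding S2_def
      using dpos by (intro divide_right_mono blocks_le[where g="\<lambda>n. (y n * w n)\<^sup>2"] XD(2)[OF y]) auto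
    finally show ?thesis .
  qed
  have s1: "summable (\<lambda>k. \<bar>Vop y k\<bar> powr p)"
    by (rule bounded_imp_summable[of _ "Sp y / \<delta> powr p"]) (simp, metis A lessThan_Suc_atMost)
  have s2: "summable (\<lambda>k. (Vop y k * w k)\<^sup>2)"
    by (rule bounded_imp_summable[of _ "S2 y / \<delta>\<^sup>2"]) (simp, metis B lessThan_Suc_atMost)
  show VX: "Vop y \<in> X" using s1 s2 by (simp add: X_iff)
  show "N (Vop y) \<le> 1 / \<delta> * N y"
  proof (rule N_leI[OF VX])
    show "0 \<le> 1 / \<delta> * N y" using dpos N_nonneg[of y] by simp
    have "Sp (Vop y) \<le> Sp y / \<delta> powr p" using suminf_le_const[OF s1 A] by (simp add: Sp_def)
    also have "\<dots> \<le> N y powr p / \<delta> powr p" using dpos by (intro divide_right_mono Sp_le_N[OF y]) auto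
    also have "\<dots> = (1 / \<delta> * N y) powr p" using dpos N_nonneg[of y] by (simp add: powr_divide powr_mult)
    finally show "Sp (Vop y) \<le> (1 / \<delta> * N y) powr p" .
    have "S2 (Vop y) \<le> S2 y / \<delta>\<^sup>2" using suminf_le_const[OF s2 B] by (simp add: S2_def)
    also have "\<dots> \<le> (N y)\<^sup>2 / \<delta>\<^sup>2" using dpos by (intro divide_right_mono S2_le_N[OF y]) auto
    also have "\<dots> = (1 / \<delta> * N y)\<^sup>2" by (simp add: power_divide)
    finally show "S2 (Vop y) \<le> (1 / \<delta> * N y)\<^sup>2" .
  qed
next
  fix x y :: "nat \<Rightarrow> real"
  show "Vop (\<lambda>k. x k + y k) = (\<lambda>k. Vop x k + Vop y k)" by (simp add: Vop_def bst_add add_divide_distrib)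
next
  fix x :: "nat \<Rightarrow> real" and a
  show "Vop (\<lambda>k. a * x k) = (\<lambda>k. a * Vop x k)" by (simp add: Vop_def bst_scale)
qed

end

context xpw begin

lemma bop_sub: assumes A: "bop A" and B: "bop B" shows "bop (\<lambda>x k. A x k - B x k)"
proof -
  obtain KA where KA: "KA \<ge> 0" "\<And>x. x \<in> X \<Longrightarrow> N (A x) \<le> KA * N x" using bop_bound[OF A] by blast
  obtain KB where KB: "KB \<ge> 0" "\<And>x. x \<in> X \<Longrightarrow> N (B x) \<le> KB * N x" using bop_bound[OF B] by blast
  show ?thesis
  proof (rule bopI[where K="KA + KB"])
    fix x assume x: "x \<in> X"
    show "(\<lambda>k. A x k - B x k) \<in> X" by (rule diff(1)[OF bopD(1)[OF A x] bopD(1)[OF B x]])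
    have "N (\<lambda>k. A x k - B x k) \<le> N (A x) + N (B x)" by (rule diff(2)[OF bopD(1)[OF A x] bopD(1)[OF B x]])
    also have "\<dots> \<le> KA * N x + KB * N x" using KA(2)[OF x] KB(2)[OF x] by simp
    finally show "N (\<lambda>k. A x k - B x k) \<le> (KA + KB) * N x" by (simp add: algebra_simps)
  next
    fix x y assume x: "x \<in> X" and y: "y \<in> X"
    show "(\<lambda>k. A (\<lambda>k. x k + y k) k - B (\<lambda>k. x k + y k) k) = (\<lambda>k. (A x k - B x k) + (A y k - B y k))"
      using bopD(2)[OF A x y] bopD(2)[OF B x y] by (simp add: algebra_simps)
  next
    fix x c assume x: "x \<in> X"
    show "(\<lambda>k. A (\<lambda>k. c * x k) k - B (\<lambda>k. c * x k) k) = (\<lambda>k. c * (A x k - B x k))"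
      using bopD(3)[OF A x] bopD(3)[OF B x] by (simp add: algebra_simps)
  qed
qed

end

context fact begin

definition "Eop x = (\<lambda>k. Vop (T (Bop x)) k - x k)"

lemma Eop_bop: "bop Eop"
  unfolding Eop_def by (rule bop_sub[OF bop_comp[OF Vop_bop bop_comp[OF Tb Bop_bop]] bop_id])

lemma Eop_unit_pt: "\<bar>Eop (unit_vec j) k\<bar> \<le> \<bar>(rho * (1/2)^j) * gq k\<bar>"
proof (cases "k = j")
  case True
  have "Vop (T (b j)) j = 1" unfolding Vop_def cc_def using c_pos[of j] by (simp add: cc_def)
  then show ?thesis using True unfolding Eop_def Bop_unit by (simp add: unit_vec_def)
next
  case False
  have "\<bar>bst k (st k) (T (b j))\<bar> \<le> \<delta> * rho * (1/2)^(k + j)"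
  proof (cases "j < k")
    case True then show ?thesis using P3[OF True] by (simp add: eta_def)
  next
    case False then have "k < j" using \<open>k \<noteq> j\<close> by simp
    then show ?thesis using P4[OF \<open>k < j\<close>] by (simp add: eta_def add.commute)
  qed
  then have "\<bar>bst k (st k) (T (b j))\<bar> / c k \<le> \<delta> * rho * (1/2)^(k + j) / \<delta>"
    using c_pos[of k] cc_ge[of k "st k"] dpos
    by (smt (verit, ccfv_SIG) abs_ge_zero divide_left_mono divide_right_mono zero_less_mult_iff)
  also have "\<dots> = rho * (1/2)^j * gq k" using dpos by (simp add: gq_def power_add)
  finally show ?thesis using False rho_pos c_pos[of k] unfolding Eop_def Bop_unit
    by (simp add: unit_vec_def Vop_def abs_divide gq_def abs_mult)
qed

lemma Eop_unit_N: "N (Eop (unit_vec j)) \<le> rho * (1/2)^j * N gq"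
proof -
  have "N (Eop (unit_vec j)) \<le> N (\<lambda>k. (rho * (1/2)^j) * gq k)"
    by (rule dominated(4)[OF scale(1)[OF gq_X]]) (rule Eop_unit_pt)
  also have "\<dots> = rho * (1/2)^j * N gq" using scale(2)[OF gq_X, of "rho * (1/2)^j"] rho_pos by simp
  finally show ?thesis .
qed

lemma Eop_half: assumes x: "x \<in> X" shows "N (Eop x) \<le> (1/2) * N x"
proof -
  obtain KE where KE: "KE \<ge> 0" "\<And>x. x \<in> X \<Longrightarrow> N (Eop x) \<le> KE * N x" using bop_bound[OF Eop_bop] by blast
  have fin: "N (Eop (\<lambda>k. if k < M then x k else 0)) \<le> (1/2) * N x" for M
  proof -
    have eq: "(\<lambda>k. if k < M then x k else 0) = (\<lambda>k. \<Sum>j<M. x j * unit_vec j k)"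
    proof
      fix k
      have "(\<Sum>j<M. x j * unit_vec j k) = (\<Sum>j<M. if j = k then x k else 0)"
        by (rule sum.cong) (auto simp: unit_vec_def)
      then show "(if k < M then x k else 0) = (\<Sum>j<M. x j * unit_vec j k)" by simp
    qed
    have "Eop (\<lambda>k. if k < M then x k else 0) = (\<lambda>k. \<Sum>j<M. x j * Eop (unit_vec j) k)"
      unfolding eq by (rule bop_sum[OF Eop_bop]) (auto intro: unit_X)
    then have "N (Eop (\<lambda>k. if k < M then x k else 0)) \<le> (\<Sum>j<M. N (\<lambda>k. x j * Eop (unit_vec j) k))"
      using X_sum[of "{..<M}" "\<lambda>j k. x j * Eop (unit_vec j) k"] scale(1)[OF bopD(1)[OF Eop_bop unit_X]]
      by simp
    also have "\<dots> = (\<Sum>j<M. \<bar>x j\<bar> * N (Eop (unit_vec j)))"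
      using scale(2)[OF bopD(1)[OF Eop_bop unit_X]] by simp
    also have "\<dots> \<le> (\<Sum>j<M. N x * (rho * (1/2)^j * N gq))"
      by (intro sum_mono mult_mono coord_le[OF x] Eop_unit_N) (auto simp: N_nonneg)
    also have "\<dots> = N x * rho * N gq * (\<Sum>j<M. (1/2)^j)"
      by (simp add: sum_distrib_left algebra_simps)
    also have "\<dots> \<le> N x * rho * N gq * 2"
    proof -
      have "(\<Sum>j<M. ((1::real)/2)^j) \<le> 2" by (simp add: sum_gp_strict)
      then show ?thesis using N_nonneg[of x] N_nonneg[of gq] rho_pos by (intro mult_left_mono) auto
    qed
    also have "\<dots> \<le> (1/2) * N x"
    proof -
      have "rho * N gq * 2 \<le> 1/2" using N_nonneg[of gq] by (simp add: rho_def field_simps)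
      then show ?thesis using N_nonneg[of x] mult_left_mono[of "rho * N gq * 2" "1/2" "N x"]
        by (simp add: algebra_simps)
    qed
    finally show ?thesis .
  qed
  have le: "N (Eop x) \<le> (1/2) * N x + KE * N (\<lambda>n. if n < M then 0 else x n)" for M
  proof -
    define xm where "xm = (\<lambda>k. if k < M then x k else 0)"
    define tm where "tm = (\<lambda>k. if k < M then 0 else x k)"
    have xm: "xm \<in> X" unfolding xm_def by (rule trunc_X(1)[OF x])
    have tm: "tm \<in> X" unfolding tm_def by (rule trunc_X(3)[OF x])
    have "x = (\<lambda>k. xm k + tm k)" by (auto simp: xm_def tm_def)
    then have "Eop x = (\<lambda>k. Eop xm k + Eop tm k)" using bopD(2)[OF Eop_bop xm tm] by simp
    then have "N (Eop x) \<le> N (Eop xm) + N (Eop tm)"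
      using add(2)[OF bopD(1)[OF Eop_bop xm] bopD(1)[OF Eop_bop tm]] by simp
    also have "\<dots> \<le> (1/2) * N x + KE * N tm" using fin[of M] KE(2)[OF tm] unfolding xm_def by simp
    finally show ?thesis unfolding tm_def .
  qed
  have "(\<lambda>M. (1/2) * N x + KE * N (\<lambda>n. if n < M then 0 else x n)) \<longlonglongrightarrow> (1/2) * N x + KE * 0"
    by (intro tendsto_add tendsto_mult tendsto_const tail_N[OF x])
  then show ?thesis using le by (intro LIMSEQ_le_const[of _ "(1/2) * N x"]) auto
qed

lemma fact_main: "\<exists>A B. bop A \<and> bop B \<and> (\<forall>x\<in>X. A (T (B x)) = x)"
proof -
  obtain R where R: "bop R" "\<forall>x\<in>X. R (\<lambda>k. x k + Eop x k) = x"
    using neumann[OF Eop_bop Eop_half] by auto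
  have "R (Vop (T (Bop x))) = x" if "x \<in> X" for x
  proof -
    have "Vop (T (Bop x)) = (\<lambda>k. x k + Eop x k)" by (simp add: Eop_def)
    then show ?thesis using R(2) that by simp
  qed
  then show ?thesis using bop_comp[OF R(1) Vop_bop] Bop_bop by blast
qed

end


theorem mainTheorem3:
  fixes p :: real and w :: "nat \<Rightarrow> real"
  assumes "2 < p"
    and "\<And>n. w n > 0"
    and "w \<longlonglongrightarrow> 0"
    and "\<not> summable (\<lambda>n. w n powr (2 * p / (p - 2)))"
  shows "\<forall>T. bounded_op_Xpw p w T \<and> (INF n. \<bar>T (unit_vec n) n\<bar>) > 0 \<longrightarrow>
           (\<exists>A B. bounded_op_Xpw p w A \<and> bounded_op_Xpw p w B \<and>
                  (\<forall>x\<in>Xpw p w. A (T (B x)) = x))"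
proof (intro allI impI)
  fix T assume h: "bounded_op_Xpw p w T \<and> (INF n. \<bar>T (unit_vec n) n\<bar>) > 0"
  define d where "d = (INF n. \<bar>T (unit_vec n) n\<bar>)"
  have bdd: "bdd_below (range (\<lambda>n. \<bar>T (unit_vec n) n\<bar>))" by (rule bdd_belowI[of _ 0]) auto
  have diag: "d \<le> \<bar>T (unit_vec n) n\<bar>" for n unfolding d_def by (rule cINF_lower[OF bdd]) simp
  interpret fact p w T d
    by unfold_locales (use assms h diag d_def in auto)
  show "\<exists>A B. bounded_op_Xpw p w A \<and> bounded_op_Xpw p w B \<and> (\<forall>x\<in>Xpw p w. A (T (B x)) = x)"
    using fact_main by blast
qed

end
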